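(* Let $\kappa\ge3$ be an integer, $\omega$ a nonnegative integer-valued function on the primes and $\mathcal{P}_0$ a finite set of primes with $\omega(p)<\kappa$ for $p\in\mathcal{P}_0$, $\omega(p)=\kappa$ for primes $p\notin\mathcal{P}_0$, and $\omega(p)<p$ for all primes $p$. Then for all $z>P(\kappa)$, \[L(z,\omega)\geq \frac{1}{\kappa!}\prod_p\left(1-\frac{\omega(p)}{p}\right)^{-1}\left(1-\frac{1}{p}\right)^\kappa\log^\kappa z\left(1-\frac{C'_\kappa}{\log z}\right),\] where $C'_\kappa = 1.02\kappa^2 + \kappa!\,C_\kappa$ and $C_\kappa = \frac{\exp(2e)}{(\kappa-1)!}\sum_{\ell=3}^{\kappa}\exp\left(\frac{e^2}{\ell}\cdot\frac{\log\ell}{\log\ell-1}\right)\log\ell$.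
   Context: $P(y)=\prod_{p\le y}p$. For a function $h$ on the primes with $0\le h(p)<p$, $L(z,h)=\sum_{q\leq z}\mu^2(q)\prod_{p\mid q}\frac{h(p)}{p-h(p)}$. Products $\prod_p$ run over all primes. *)

theory Defs
  imports "HOL-Analysis.Analysis" "HOL-Computational_Algebra.Squarefree"
begin

definition primorial :: "real \<Rightarrow> nat" where
  "primorial y = (\<Prod>p\<in>{p::nat. prime p \<and> real p \<le> y}. p)"

definition L_fun :: "real \<Rightarrow> (nat \<Rightarrow> real) \<Rightarrow> real" where
  "L_fun z h = (\<Sum>q\<in>{q::nat. 1 \<le> q \<and> real q \<le> z}.
      (if squarefree q then 1 else 0) * (\<Prod>p\<in>prime_factors q. h p / (real p - h p)))"

definition C_const :: "nat \<Rightarrow> real" where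
  "C_const k = exp (2 * exp 1) / fact (k - 1) *
     (\<Sum>l=3..k. exp ((exp 1)^2 / real l * (ln (real l) / (ln (real l) - 1))) * ln (real l))"

definition C'_const :: "nat \<Rightarrow> real" where
  "C'_const k = 1.02 * (real k)^2 + fact k * C_const k"

end

theory Submission
  imports Defs
begin


definition unitc :: "nat \<Rightarrow> real" where "unitc j = (if j = 0 then 1 else 0)"
definition lconv :: "(nat\<Rightarrow>real) \<Rightarrow> (nat\<Rightarrow>real) \<Rightarrow> nat \<Rightarrow> real" where
  "lconv a b e = (\<Sum>i\<le>e. a i * b (e - i))"
definition mf :: "(nat \<Rightarrow> nat \<Rightarrow> real) \<Rightarrow> nat \<Rightarrow> real" where
  "mf l n = (\<Prod>p\<in>prime_factors n. l p (multiplicity p n))"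
definition Sm :: "(nat \<Rightarrow> nat \<Rightarrow> real) \<Rightarrow> real \<Rightarrow> real" where
  "Sm l x = (\<Sum>n\<in>{n. 1 \<le> n \<and> real n \<le> x}. mf l n)"

lemma prime_factors_pow_prime:
  assumes "prime (p::nat)" "e > 0" shows "prime_factors (p^e) = {p}"
  using assms by (simp add: prime_factorization_prime_power)

lemma mf_1 [simp]: "mf l 1 = 1" by (simp add: mf_def)

lemma mf_mult:
  assumes p: "prime (p::nat)" and nd: "\<not> p dvd m" and m: "m > 0" and l0: "l p 0 = 1"
  shows "mf l (p^e * m) = l p e * mf l m"
proof (cases "e = 0")
  case True then show ?thesis by (simp add: l0)
next
  case False
  have pe: "p^e \<noteq> 0" using p by (simp add: prime_gt_0_nat)
  have pf: "prime_factors (p^e * m) = insert p (prime_factors m)"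
    using prime_factors_product[OF pe] m False p prime_factors_pow_prime by auto
  have pn: "p \<notin> prime_factors m" using nd by auto
  have mp: "multiplicity p (p^e * m) = e"
    using p nd m by (metis multiplicity_decomposeI not_prime_0)
  have mq: "multiplicity q (p^e * m) = multiplicity q m" if "q \<in> prime_factors m" for q
  proof -
    have qp: "prime q" "q \<noteq> p" using that pn by auto
    have "multiplicity q (p^e * m) = multiplicity q (p^e) + multiplicity q m"
      using qp pe m by (simp add: prime_elem_multiplicity_mult_distrib)
    also have "multiplicity q (p^e) = 0" using qp p multiplicity_distinct_prime_power by blast
    finally show ?thesis by simp
  qed
  have "mf l (p^e*m) = l p e * (\<Prod>q\<in>prime_factors m. l q (multiplicity q (p^e*m)))"
    unfolding mf_def pf using pn mp by (simp add: prod.insert)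
  also have "(\<Prod>q\<in>prime_factors m. l q (multiplicity q (p^e*m))) = mf l m"
    unfolding mf_def by (rule prod.cong) (auto simp: mq)
  finally show ?thesis .
qed


lemma dvd_decomp:
  assumes p: "prime (p::nat)" and nd: "\<not> p dvd k" and k: "k > 0"
  shows "{d. d dvd p^e*k} = (\<lambda>(i,d). p^i*d) ` ({..e} \<times> {d. d dvd k})"
proof
  show "(\<lambda>(i,d). p^i*d) ` ({..e} \<times> {d. d dvd k}) \<subseteq> {d. d dvd p^e*k}"
  proof (clarsimp)
    fix i d assume "i \<le> e" "d dvd k"
    thus "p^i*d dvd p^e*k" using le_imp_power_dvd mult_dvd_mono by blast
  qed
next
  show "{d. d dvd p^e*k} \<subseteq> (\<lambda>(i,d). p^i*d) ` ({..e} \<times> {d. d dvd k})"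
  proof
    fix d assume "d \<in> {d. d dvd p^e*k}"
    hence dd: "d dvd p^e*k" by simp
    have pe0: "p^e*k \<noteq> 0" using k p by (simp add: prime_gt_0_nat)
    have d0: "d \<noteq> 0" using dd pe0 by (metis dvd_0_left_iff)
    have pu: "\<not> is_unit p" using p by auto
    obtain y where y: "d = p ^ multiplicity p d * y" "\<not> p dvd y"
      using multiplicity_decompose'[OF d0 pu] by blast
    have mle: "multiplicity p d \<le> multiplicity p (p^e*k)"
      using dd pe0 by (intro dvd_imp_multiplicity_le) auto
    have "multiplicity p (p^e*k) = e" using p nd by (metis multiplicity_decomposeI not_prime_0)
    hence ile: "multiplicity p d \<le> e" using mle by simp
    have "y dvd p^e*k" using dd y by (metis dvd_mult_right)
    moreover have "coprime y (p^e)"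
      using y(2) p by (metis coprime_commute coprime_power_left_iff prime_imp_coprime)
    ultimately have "y dvd k" using coprime_dvd_mult_right_iff by blast
    thus "d \<in> (\<lambda>(i,d). p^i*d) ` ({..e} \<times> {d. d dvd k})"
      using y ile by (auto intro!: image_eqI[of _ _ "(multiplicity p d, y)"])
  qed
qed

lemma dvd_decomp_inj:
  assumes p: "prime (p::nat)" and nd: "\<not> p dvd k" and k: "k > 0"
  shows "inj_on (\<lambda>(i,d). p^i*d) ({..e} \<times> {d. d dvd k})"
proof (rule inj_onI, clarsimp)
  fix i d j d' assume d: "d dvd k" and d': "d' dvd k" and eq: "p^i*d = p^j*d'"
  have nd1: "\<not> p dvd d" using d nd dvd_trans by blast
  have nd2: "\<not> p dvd d'" using d' nd dvd_trans by blast
  have "multiplicity p (p^i*d) = i" using nd1 p by (metis multiplicity_decomposeI not_prime_0)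
  moreover have "multiplicity p (p^j*d') = j" using nd2 p by (metis multiplicity_decomposeI not_prime_0)
  ultimately have ij: "i = j" using eq by simp
  hence "d = d'" using eq p by (simp add: prime_gt_0_nat)
  thus "i = j \<and> d = d'" using ij by simp
qed

lemma mf_Suc0 [simp]: "mf l (Suc 0) = 1" by (simp add: mf_def)

lemma dmult:
  assumes a0: "\<And>q. a q 0 = 1" and b0: "\<And>q. b q 0 = 1"
  shows "n > 0 \<Longrightarrow> (\<Sum>d\<in>{d. d dvd n}. mf a d * mf b (n div d)) = mf (\<lambda>q. lconv (a q) (b q)) n"
proof (induction n rule: less_induct)
  case (less n)
  show ?case
  proof (cases "n = 1")
    case True
    then show ?thesis by simp
  next
    case False
    with less.prems have n1: "n > 1" by simp
    obtain p where p: "prime p" "p dvd n" using n1 prime_factor_nat by (metis less_irrefl)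
    define e where "e = multiplicity p n"
    have n0: "n \<noteq> 0" using n1 by simp
    have pu: "\<not> is_unit p" using p by auto
    obtain k where k: "n = p^e * k" "\<not> p dvd k"
      using multiplicity_decompose'[OF n0 pu] e_def by blast
    have kpos: "k > 0" using k n0 by (cases k) auto
    have e1: "e \<ge> 1"
    proof (rule ccontr)
      assume "\<not> e \<ge> 1" hence "e = 0" by simp
      thus False using k p by simp
    qed
    have "p^e \<ge> p" using e1 prime_gt_0_nat[OF p(1)] by (simp add: self_le_power)
    hence kn: "k < n" using k p kpos prime_gt_1_nat[OF p(1)]
      by (metis less_le_trans mult_less_cancel2 nat_mult_1 order.refl)
    have IH: "(\<Sum>d\<in>{d. d dvd k}. mf a d * mf b (k div d)) = mf (\<lambda>q. lconv (a q) (b q)) k"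
      using less.IH[OF kn kpos] .
    have fin: "finite {d. d dvd k}" using kpos by simp
    have "(\<Sum>d\<in>{d. d dvd n}. mf a d * mf b (n div d))
        = (\<Sum>x\<in>{..e} \<times> {d. d dvd k}. mf a (p^fst x * snd x) * mf b (n div (p^fst x * snd x)))"
      unfolding k(1) dvd_decomp[OF p(1) k(2) kpos]
      by (subst sum.reindex[OF dvd_decomp_inj[OF p(1) k(2) kpos]]) (simp add: case_prod_beta)
    also have "\<dots> = (\<Sum>x\<in>{..e} \<times> {d. d dvd k}. (a p (fst x) * b p (e - fst x)) * (mf a (snd x) * mf b (k div snd x)))"
    proof (rule sum.cong, simp, clarsimp)
      fix i d assume i: "i \<le> e" and d: "d dvd k"
      have dpos: "d > 0" using d kpos by (metis dvd_pos_nat)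
      have ndd: "\<not> p dvd d" using d k(2) dvd_trans by blast
      have kd: "k div d > 0" using d kpos dpos by (auto elim!: dvdE)
      have ndk: "\<not> p dvd (k div d)" 
      proof
        assume "p dvd k div d" hence "p dvd d * (k div d)" by (rule dvd_mult)
        thus False using d k(2) by simp
      qed
      have "n div (p^i*d) = p^(e-i) * (k div d)"
      proof -
        have pp: "p^i * p^(e-i) = p^e" using i by (simp add: power_add[symmetric])
        have dk: "d * (k div d) = k" using d by simp
        have "(p^i*d) * (p^(e-i) * (k div d)) = (p^i * p^(e-i)) * (d * (k div d))"
          by (simp only: mult_ac)
        hence "n = (p^i*d) * (p^(e-i) * (k div d))" using pp dk k(1) by simp
        thus ?thesis using dpos p by (simp add: prime_gt_0_nat)
      qed
      thus "mf a (p^i*d) * mf b (n div (p^i*d)) = a p i * b p (e-i) * (mf a d * mf b (k div d))"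
        using mf_mult[where l=a, OF p(1) ndd dpos a0] mf_mult[where l=b, OF p(1) ndk kd b0] by simp
    qed
    also have "\<dots> = (\<Sum>i\<le>e. a p i * b p (e - i)) * (\<Sum>d\<in>{d. d dvd k}. mf a d * mf b (k div d))"
      unfolding sum_product sum.cartesian_product by (simp add: case_prod_beta)
    also have "\<dots> = lconv (a p) (b p) e * mf (\<lambda>q. lconv (a q) (b q)) k"
      by (simp add: IH lconv_def)
    also have "\<dots> = mf (\<lambda>q. lconv (a q) (b q)) n"
      using mf_mult[OF p(1) k(2) kpos, of "\<lambda>q. lconv (a q) (b q)" e] k(1)
      by (simp add: lconv_def a0 b0)
    finally show ?thesis .
  qed
qed


lemma finN: "finite {n::nat. 1 \<le> n \<and> real n \<le> x}"
proof (rule finite_subset[of _ "{..nat \<lceil>x\<rceil>}"])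
  show "{n::nat. 1 \<le> n \<and> real n \<le> x} \<subseteq> {..nat \<lceil>x\<rceil>}"
  proof
    fix n assume "n \<in> {n::nat. 1 \<le> n \<and> real n \<le> x}"
    hence "real n \<le> x" by simp
    hence "real n \<le> real_of_int \<lceil>x\<rceil>" by (meson le_of_int_ceiling order_trans)
    hence "int n \<le> \<lceil>x\<rceil>" by (metis of_int_le_iff of_int_of_nat_eq)
    thus "n \<in> {..nat \<lceil>x\<rceil>}" by (simp add: le_nat_iff)
  qed
qed simp

lemma finN' [simp]: "finite {n::nat. Suc 0 \<le> n \<and> real n \<le> x}"
  using finN[of x] by simp

lemma sumconv:
  "(\<Sum>n\<in>{n. 1 \<le> n \<and> real n \<le> x}. \<Sum>d\<in>{d. d dvd n}. f d * g (n div d)) =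
   (\<Sum>d\<in>{d. 1 \<le> d \<and> real d \<le> x}. f d * (\<Sum>m\<in>{m. 1 \<le> m \<and> real m \<le> x / real d}. (g m :: real)))"
proof -
  have "(\<Sum>n\<in>{n. 1 \<le> n \<and> real n \<le> x}. \<Sum>d\<in>{d. d dvd n}. f d * g (n div d)) =
        (\<Sum>(n,d)\<in>Sigma {n. 1 \<le> n \<and> real n \<le> x} (\<lambda>n. {d. d dvd n}). f d * g (n div d))"
    by (rule sum.Sigma) (auto simp: finN)
  also have "\<dots> = (\<Sum>(d,m)\<in>Sigma {d. 1 \<le> d \<and> real d \<le> x} (\<lambda>d. {m. 1 \<le> m \<and> real m \<le> x / real d}). f d * g m)"
  proof (rule sum.reindex_bij_witness[where i = "\<lambda>(d,m). (d*m, d)" and j = "\<lambda>(n,d). (d, n div d)"])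
    fix a assume "a \<in> Sigma {n. 1 \<le> n \<and> real n \<le> x} (\<lambda>n. {d. d dvd n})"
    then obtain n d where a: "a = (n,d)" "1 \<le> n" "real n \<le> x" "d dvd n" by auto
    have d1: "1 \<le> d"
    proof (rule ccontr)
      assume "\<not> 1 \<le> d" hence "d = 0" by simp
      thus False using a by simp
    qed
    have nd: "d * (n div d) = n" using a by simp
    have q1: "1 \<le> n div d" using nd a(2) by (cases "n div d") auto
    have "real d * real (n div d) \<le> x" using nd a by (metis of_nat_mult)
    hence q2: "real (n div d) \<le> x / real d" using d1 by (simp add: pos_le_divide_eq mult.commute)
    have "d \<le> n" using a by (intro dvd_imp_le) auto
    hence "real d \<le> x" using a(3) by linarith
    show "(\<lambda>(d,m). (d*m, d)) ((\<lambda>(n,d). (d, n div d)) a) = a" using a nd by simp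
    show "(\<lambda>(n,d). (d, n div d)) a \<in> Sigma {d. 1 \<le> d \<and> real d \<le> x} (\<lambda>d. {m. 1 \<le> m \<and> real m \<le> x / real d})"
      using a d1 q1 q2 \<open>real d \<le> x\<close> by simp
    show "(case (\<lambda>(n,d). (d, n div d)) a of (d, m) \<Rightarrow> f d * g m) = (case a of (n, d) \<Rightarrow> f d * g (n div d))"
      using a by simp
  next
    fix b assume "b \<in> Sigma {d. 1 \<le> d \<and> real d \<le> x} (\<lambda>d. {m. 1 \<le> m \<and> real m \<le> x / real d})"
    then obtain d m where b: "b = (d,m)" "1 \<le> d" "real d \<le> x" "1 \<le> m" "real m \<le> x / real d" by auto
    have "real d * real m \<le> x" using b by (simp add: pos_le_divide_eq mult.commute)
    hence "real (d*m) \<le> x" by simp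
    moreover have "1 \<le> d*m" using b by simp
    ultimately show "(\<lambda>(d,m). (d*m, d)) b \<in> Sigma {n. 1 \<le> n \<and> real n \<le> x} (\<lambda>n. {d. d dvd n})"
      using b by simp
    show "(\<lambda>(n,d). (d, n div d)) ((\<lambda>(d,m). (d*m, d)) b) = b" using b by simp
  qed
  also have "\<dots> = (\<Sum>d\<in>{d. 1 \<le> d \<and> real d \<le> x}. \<Sum>m\<in>{m. 1 \<le> m \<and> real m \<le> x / real d}. f d * g m)"
    by (rule sum.Sigma[symmetric]) (auto simp: finN)
  finally show ?thesis by (simp add: sum_distrib_left)
qed


lemma lconv_unit_left [simp]: "lconv unitc b = b"
proof
  fix e
  have "lconv unitc b e = (\<Sum>i\<le>e. if i = 0 then b (e - i) else 0)"
    unfolding lconv_def unitc_def by (rule sum.cong) auto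
  also have "\<dots> = b e" by (simp add: sum.delta)
  finally show "lconv unitc b e = b e" .
qed

lemma lconv_unit_right [simp]: "lconv b unitc = b"
proof
  fix e
  have "lconv b unitc e = (\<Sum>i\<le>e. if i = e then b i else 0)"
    unfolding lconv_def unitc_def by (rule sum.cong) auto
  also have "\<dots> = b e" by (simp add: sum.delta)
  finally show "lconv b unitc e = b e" .
qed

lemma lconv_0 [simp]: "lconv a b 0 = a 0 * b 0" by (simp add: lconv_def)
lemma unitc_0 [simp]: "unitc 0 = 1" by (simp add: unitc_def)

lemma mf_point:
  assumes p: "prime (p::nat)" and t0: "t 0 = 1" and d: "d \<ge> 1"
  shows "mf ((\<lambda>q. unitc)(p := t)) d = (if d = p ^ multiplicity p d then t (multiplicity p d) else 0)"
proof (cases "d = p ^ multiplicity p d")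
  case True
  show ?thesis
  proof (cases "multiplicity p d = 0")
    case True
    hence "d = 1" using \<open>d = p ^ multiplicity p d\<close> by simp
    thus ?thesis using t0 by simp
  next
    case False
    have "mf ((\<lambda>q. unitc)(p := t)) (p ^ multiplicity p d) = t (multiplicity p d)"
      unfolding mf_def using prime_factors_pow_prime[OF p] False p
      by (simp add: multiplicity_prime_power)
    thus ?thesis using True by simp
  qed
next
  case False
  have "\<exists>q\<in>prime_factors d. q \<noteq> p"
  proof (rule ccontr)
    assume "\<not> (\<exists>q\<in>prime_factors d. q \<noteq> p)"
    hence sub: "prime_factors d \<subseteq> {p}" by auto
    have "d = (\<Prod>q\<in>prime_factors d. q ^ multiplicity q d)" using d prime_factorization_nat by simp
    also have "\<dots> = p ^ multiplicity p d"
    proof (cases "prime_factors d = {}")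
      case True
      hence "d = 1" using \<open>d = (\<Prod>q\<in>prime_factors d. q ^ multiplicity q d)\<close> by simp
      thus ?thesis using True by simp
    next
      case False
      hence "prime_factors d = {p}" using sub by auto
      thus ?thesis by simp
    qed
    finally show False using \<open>d \<noteq> p ^ multiplicity p d\<close> by simp
  qed
  then obtain q where q: "q \<in> prime_factors d" "q \<noteq> p" by blast
  have "multiplicity q d \<ge> 1" using q d by (simp add: prime_factors_multiplicity)
  hence hz: "((\<lambda>q. unitc)(p := t)) q (multiplicity q d) = 0" using q by (simp add: unitc_def)
  have "mf ((\<lambda>q. unitc)(p := t)) d = 0" unfolding mf_def
  proof (rule prod_zero)
    show "\<exists>a\<in>prime_factors d. ((\<lambda>q. unitc)(p := t)) a (multiplicity a d) = 0"
      using hz q(1) by blast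
  qed simp
  thus ?thesis using False by simp
qed

lemma fin_pow: assumes "prime (p::nat)" shows "finite {j. real (p^j) \<le> x}"
proof (rule finite_subset[of _ "{..nat \<lceil>x\<rceil>}"])
  show "{j. real (p^j) \<le> x} \<subseteq> {..nat \<lceil>x\<rceil>}"
  proof
    fix j assume "j \<in> {j. real (p^j) \<le> x}"
    hence "real (p^j) \<le> x" by simp
    moreover have "j < p^j"
    proof -
      have "(2::nat)^j \<le> p^j" using prime_gt_1_nat[OF assms] by (simp add: power_mono)
      thus ?thesis using less_exp[of j] by linarith
    qed
    ultimately have "real j \<le> x" by (meson less_imp_le of_nat_le_iff order_trans)
    hence "real j \<le> real_of_int \<lceil>x\<rceil>" by (meson le_of_int_ceiling order_trans)
    hence "int j \<le> \<lceil>x\<rceil>" by (metis of_int_le_iff of_int_of_nat_eq)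
    thus "j \<in> {..nat \<lceil>x\<rceil>}" by (simp add: le_nat_iff)
  qed
qed simp

lemma sum_ppow:
  assumes p: "prime (p::nat)" and t0: "t 0 = 1"
  shows "(\<Sum>d\<in>{d. 1 \<le> d \<and> real d \<le> x}. mf ((\<lambda>q. unitc)(p:=t)) d * X d) =
         (\<Sum>j\<in>{j. real (p^j) \<le> x}. t j * X (p^j))"
proof -
  let ?T = "(\<lambda>j. p^j) ` {j. real (p^j) \<le> x}"
  have p1: "p > 1" using prime_gt_1_nat[OF p] .
  have sub: "?T \<subseteq> {d. 1 \<le> d \<and> real d \<le> x}" using p1 by auto
  have "(\<Sum>d\<in>{d. 1 \<le> d \<and> real d \<le> x}. mf ((\<lambda>q. unitc)(p:=t)) d * X d) =
        (\<Sum>d\<in>?T. mf ((\<lambda>q. unitc)(p:=t)) d * X d)"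
  proof (rule sum.mono_neutral_right[OF finN sub], clarify)
    fix d assume d: "1 \<le> d" "real d \<le> x" and nt: "d \<notin> ?T"
    define m where "m = multiplicity p d"
    have "d \<noteq> p ^ m"
    proof
      assume dm: "d = p ^ m"
      moreover have "real (p ^ m) \<le> x" using d(2) dm by simp
      ultimately have "d \<in> ?T" by (intro image_eqI[of _ _ "m"]) auto
      thus False using nt by simp
    qed
    thus "mf ((\<lambda>q. unitc)(p:=t)) d * X d = 0" using mf_point[where t=t, OF p t0 d(1)] m_def by simp
  qed
  also have "\<dots> = (\<Sum>j\<in>{j. real (p^j) \<le> x}. mf ((\<lambda>q. unitc)(p:=t)) (p^j) * X (p^j))"
  proof (rule sum.reindex[unfolded comp_def])
    show "inj_on (\<lambda>j. p^j) {j. real (p^j) \<le> x}" using p1 by (auto intro!: inj_onI simp: power_inject_exp)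
  qed
  also have "\<dots> = (\<Sum>j\<in>{j. real (p^j) \<le> x}. t j * X (p^j))"
  proof (rule sum.cong, simp)
    fix j
    have "p^j \<ge> 1" using p1 by simp
    thus "mf ((\<lambda>q. unitc)(p:=t)) (p^j) * X (p^j) = t j * X (p^j)"
      using mf_point[where t=t, OF p t0, of "p^j"] p by (simp add: multiplicity_prime_power)
  qed
  finally show ?thesis .
qed

lemma split_sum:
  assumes p: "prime (p::nat)" and l0: "\<And>q. l q 0 = 1" and t0: "t 0 = 1" and s0: "s 0 = 1"
  shows "Sm (l(p := lconv t s)) x = (\<Sum>j\<in>{j. real (p^j) \<le> x}. t j * Sm (l(p := s)) (x / real (p^j)))"
proof -
  let ?a = "(\<lambda>q. unitc)(p := t)" and ?b = "l(p := s)"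
  have a0: "\<And>q. ?a q 0 = 1" using t0 by simp
  have b0: "\<And>q. ?b q 0 = 1" using s0 l0 by simp
  have eq: "(\<lambda>q. lconv (?a q) (?b q)) = l(p := lconv t s)" by (rule ext) simp
  have key: "mf (l(p := lconv t s)) n = (\<Sum>d\<in>{d. d dvd n}. mf ?a d * mf ?b (n div d))" if "n > 0" for n
    using dmult[where a = ?a and b = ?b, OF a0 b0, of n] that unfolding eq by simp
  have "Sm (l(p := lconv t s)) x = (\<Sum>n\<in>{n. 1 \<le> n \<and> real n \<le> x}. \<Sum>d\<in>{d. d dvd n}. mf ?a d * mf ?b (n div d))"
    unfolding Sm_def by (rule sum.cong) (auto simp: key)
  also have "\<dots> = (\<Sum>d\<in>{d. 1 \<le> d \<and> real d \<le> x}. mf ?a d * Sm ?b (x / real d))"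
    unfolding sumconv Sm_def ..
  also have "\<dots> = (\<Sum>j\<in>{j. real (p^j) \<le> x}. t j * Sm ?b (x / real (p^j)))"
    by (rule sum_ppow[where t=t, OF p t0])
  finally show ?thesis .
qed


lemma mf_nonneg: "(\<And>q e. l q e \<ge> 0) \<Longrightarrow> mf l n \<ge> 0"
  unfolding mf_def by (rule prod_nonneg) auto

lemma Sm_nonneg: "(\<And>q e. l q e \<ge> 0) \<Longrightarrow> Sm l x \<ge> 0"
  unfolding Sm_def by (rule sum_nonneg) (auto intro: mf_nonneg)

lemma Sm_mono: "(\<And>q e. l q e \<ge> 0) \<Longrightarrow> x \<le> y \<Longrightarrow> Sm l x \<le> Sm l y"
  unfolding Sm_def by (rule sum_mono2[OF finN]) (auto intro: mf_nonneg)

lemma Sm_small: "x < 1 \<Longrightarrow> Sm l x = 0"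
proof -
  assume "x < 1"
  hence e: "{n::nat. 1 \<le> n \<and> real n \<le> x} = {}" by auto
  show ?thesis unfolding Sm_def e by simp
qed

lemma mf_unit: "n \<ge> 1 \<Longrightarrow> mf (\<lambda>q. unitc) n = (if n = 1 then 1 else 0)"
proof -
  assume n: "n \<ge> 1"
  show ?thesis
  proof (cases "n = 1")
    case False
    hence "n > 1" using n by simp
    then obtain p where p: "prime p" "p dvd n" using prime_factor_nat by (metis less_irrefl)
    hence pin: "p \<in> prime_factors n" using n by (simp add: in_prime_factors_iff)
    hence "multiplicity p n \<ge> 1" using n by (simp add: prime_factors_multiplicity)
    hence "unitc (multiplicity p n) = 0" by (simp add: unitc_def)
    hence "mf (\<lambda>q. unitc) n = 0" unfolding mf_def
    proof (intro prod_zero)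
      show "\<exists>a\<in>prime_factors n. unitc (multiplicity a n) = 0" using pin \<open>unitc (multiplicity p n) = 0\<close> by blast
    qed simp
    thus ?thesis using False by simp
  qed simp
qed

lemma Sm_unit: "x \<ge> 1 \<Longrightarrow> Sm (\<lambda>q. unitc) x = 1"
proof -
  assume x: "x \<ge> 1"
  have "Sm (\<lambda>q. unitc) x = (\<Sum>n\<in>{n. 1 \<le> n \<and> real n \<le> x}. if n = 1 then 1 else 0)"
    unfolding Sm_def by (rule sum.cong) (auto simp: mf_unit)
  also have "\<dots> = 1" using x by (simp add: sum.delta finN)
  finally show ?thesis .
qed

definition geo :: "nat \<Rightarrow> nat \<Rightarrow> real" where "geo q j = 1 / real q ^ j"

lemma mf_geo: "n \<ge> 1 \<Longrightarrow> mf geo n = 1 / real n"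
proof -
  assume n: "n \<ge> 1"
  have "mf geo n = (\<Prod>p\<in>prime_factors n. 1 / real (p ^ multiplicity p n))"
    unfolding mf_def geo_def by simp
  also have "\<dots> = 1 / (\<Prod>p\<in>prime_factors n. real (p ^ multiplicity p n))"
    by (simp add: prod_dividef)
  also have "(\<Prod>p\<in>prime_factors n. real (p ^ multiplicity p n)) = real n"
  proof -
    have "n = (\<Prod>p\<in>prime_factors n. p ^ multiplicity p n)" using prime_factorization_nat[of n] n by simp
    hence "real n = real (\<Prod>p\<in>prime_factors n. p ^ multiplicity p n)" by (rule arg_cong)
    thus ?thesis by (simp only: of_nat_prod)
  qed
  finally show ?thesis .
qed

lemma lconv_nonneg: "(\<And>i. a i \<ge> 0) \<Longrightarrow> (\<And>j. b j \<ge> 0) \<Longrightarrow> lconv a b e \<ge> 0"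
  unfolding lconv_def by (rule sum_nonneg) auto

lemma conv_partial:
  assumes a: "\<And>i. a i \<ge> 0" and b: "\<And>j. b j \<ge> 0"
  shows "(\<Sum>e<n. lconv a b e) \<le> (\<Sum>i<n. a i) * (\<Sum>j<n. b j)"
proof -
  have "(\<Sum>e<n. lconv a b e) = (\<Sum>(e,i)\<in>Sigma {..<n} (\<lambda>e. {..e}). a i * b (e - i))"
    unfolding lconv_def by (rule sum.Sigma) auto
  also have "\<dots> = (\<Sum>(i,j)\<in>{(i,j). i + j < n}. a i * b j)"
  proof (rule sum.reindex_bij_witness[where i = "\<lambda>(i,j). (i+j, i)" and j = "\<lambda>(e,i). (i, e - i)"])
  qed auto
  also have "\<dots> \<le> (\<Sum>(i,j)\<in>{..<n} \<times> {..<n}. a i * b j)"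
    by (rule sum_mono2) (auto intro: mult_nonneg_nonneg a b)
  also have "\<dots> = (\<Sum>i<n. a i) * (\<Sum>j<n. b j)"
    by (simp add: sum_product sum.cartesian_product)
  finally show ?thesis .
qed

lemma partial_to_set:
  assumes w: "\<And>j. w j \<ge> (0::real)" and P: "\<And>n. (\<Sum>j<n. w j) \<le> W" and J: "finite (J::nat set)"
  shows "(\<Sum>j\<in>J. w j) \<le> W"
proof -
  have "J \<subseteq> {..<Suc (Max (insert 0 J))}" using J by (auto simp: le_imp_less_Suc)
  hence "(\<Sum>j\<in>J. w j) \<le> (\<Sum>j<Suc (Max (insert 0 J)). w j)"
    by (intro sum_mono2) (auto simp: w)
  also have "\<dots> \<le> W" by (rule P)
  finally show ?thesis .
qed

fun cp :: "(nat \<Rightarrow> real) \<Rightarrow> nat \<Rightarrow> nat \<Rightarrow> real" where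
  "cp a 0 = unitc" | "cp a (Suc k) = lconv a (cp a k)"

lemma cp_0: "a 0 = 1 \<Longrightarrow> cp a k 0 = 1" by (induction k) auto

lemma unitc_nonneg: "unitc j \<ge> 0" by (simp add: unitc_def)

lemma cp_nonneg: "(\<And>i. a i \<ge> 0) \<Longrightarrow> cp a k j \<ge> 0"
  by (induction k arbitrary: j) (auto intro: lconv_nonneg unitc_nonneg)

lemma unitc_partial: "(\<Sum>j<n. unitc j) \<le> 1"
proof (cases n)
  case (Suc m)
  thus ?thesis by (simp add: unitc_def sum.delta lessThan_Suc_eq_insert_0)
qed simp

lemma cp_partial:
  assumes a: "\<And>i. a i \<ge> 0" and A: "(\<Sum>i<n. a i) \<le> S"
  shows "(\<Sum>j<n. cp a k j) \<le> S ^ k"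
proof (induction k)
  case 0 thus ?case using unitc_partial by simp
next
  case (Suc k)
  have S0: "S \<ge> 0" using A a by (meson order_trans sum_nonneg)
  have "(\<Sum>j<n. cp a (Suc k) j) \<le> (\<Sum>i<n. a i) * (\<Sum>j<n. cp a k j)"
    by simp (rule conv_partial[OF a cp_nonneg[OF a]])
  also have "\<dots> \<le> S * S ^ k"
    by (rule mult_mono[OF A Suc.IH S0]) (auto intro: sum_nonneg a cp_nonneg)
  finally show ?case by simp
qed

lemma geo_partial:
  assumes q: "q \<ge> 2" shows "(\<Sum>j<n. geo q j) \<le> real q / (real q - 1)"
proof -
  have q1: "real q > 1" using q by simp
  have "(\<Sum>j<n. geo q j) = (\<Sum>j<n. (1 / real q) ^ j)" unfolding geo_def by (simp add: power_one_over)
  also have "\<dots> = (1 - (1/real q)^n) / (1 - 1/real q)" using q1 by (simp add: sum_gp_strict)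
  also have "\<dots> \<le> 1 / (1 - 1/real q)"
    using q1 by (intro divide_right_mono) auto
  also have "\<dots> = real q / (real q - 1)" using q1 by (simp add: field_simps)
  finally show ?thesis .
qed

lemma geo_nonneg: "geo q j \<ge> 0" by (simp add: geo_def)
lemma geo_0 [simp]: "geo q 0 = 1" by (simp add: geo_def)


lemma powdiff:
  fixes u v :: real
  assumes v: "0 \<le> v" and vu: "v \<le> u"
  shows "u^(Suc n) - v^(Suc n) \<le> real (Suc n) * u^n * (u - v)"
proof (induction n)
  case 0 thus ?case by simp
next
  case (Suc n)
  have u0: "u \<ge> 0" using v vu by linarith
  have "u^(Suc (Suc n)) - v^(Suc (Suc n)) = u * (u^(Suc n) - v^(Suc n)) + v^(Suc n) * (u - v)"
    by (simp add: algebra_simps)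
  also have "\<dots> \<le> u * (real (Suc n) * u^n * (u - v)) + u^(Suc n) * (u - v)"
  proof (rule add_mono)
    show "u * (u^(Suc n) - v^(Suc n)) \<le> u * (real (Suc n) * u^n * (u - v))"
      by (rule mult_left_mono[OF Suc.IH u0])
    show "v^(Suc n) * (u - v) \<le> u^(Suc n) * (u - v)"
      by (rule mult_right_mono[OF power_mono[OF vu v]]) (simp add: vu)
  qed
  also have "\<dots> = real (Suc (Suc n)) * u^(Suc n) * (u - v)" by (simp add: algebra_simps)
  finally show ?case .
qed

lemma setN_eq: "x \<ge> 0 \<Longrightarrow> {d::nat. 1 \<le> d \<and> real d \<le> x} = {1..nat \<lfloor>x\<rfloor>}"
proof -
  assume x: "x \<ge> 0"
  have "real d \<le> x \<longleftrightarrow> d \<le> nat \<lfloor>x\<rfloor>" for d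
  proof -
    have "real d \<le> x \<longleftrightarrow> int d \<le> \<lfloor>x\<rfloor>" by (simp add: le_floor_iff)
    also have "\<dots> \<longleftrightarrow> d \<le> nat \<lfloor>x\<rfloor>" using x by (simp add: le_nat_iff)
    finally show ?thesis .
  qed
  thus ?thesis by (intro set_eqI) (simp only: mem_Collect_eq atLeastAtMost_iff)
qed

lemma tel:
  assumes x: "x \<ge> 1"
  shows "(\<Sum>d\<in>{d. 1 \<le> d \<and> real d \<le> x}. ln (x / real d) ^ k / real d) \<ge> ln x ^ Suc k / real (Suc k)"
proof -
  define N where "N = nat \<lfloor>x\<rfloor>"
  define U where "U d = (max 0 (ln (x / real d))) ^ Suc k" for d :: nat
  have N1: "N \<ge> 1" using x unfolding N_def by linarith
  have xN: "x < real (Suc N)" unfolding N_def using x by linarith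
  have Nx: "real N \<le> x" unfolding N_def using x by linarith
  have step: "U d - U (Suc d) \<le> real (Suc k) * (ln (x / real d) ^ k / real d)" if d: "d \<in> {1..N}" for d
  proof -
    have d1: "real d \<ge> 1" using d by simp
    have dx: "real d \<le> x" using d Nx by (meson atLeastAtMost_iff of_nat_le_iff order_trans)
    define u where "u = ln (x / real d)"
    define v where "v = max 0 (ln (x / real (Suc d)))"
    have u0: "u \<ge> 0" unfolding u_def using d1 dx by simp
    have lnq: "ln (real (Suc d) / real d) \<le> 1 / real d"
    proof -
      have "ln (real (Suc d) / real d) \<le> real (Suc d) / real d - 1" using d1 by (intro ln_le_minus_one) auto
      also have "\<dots> = 1 / real d" using d1 by (simp add: field_simps)
      finally show ?thesis .
    qed
    have v0: "v \<ge> 0" unfolding v_def by simp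
    have vu: "v \<le> u"
    proof -
      have "ln (x / real (Suc d)) \<le> ln (x / real d)"
        using d1 x by (intro ln_mono) (auto simp: field_simps)
      thus ?thesis unfolding v_def u_def using u0 u_def by simp
    qed
    have uv: "u - v \<le> 1 / real d"
    proof (cases "ln (x / real (Suc d)) \<ge> 0")
      case True
      hence "u - v = ln (x / real d) - ln (x / real (Suc d))" unfolding u_def v_def by simp
      also have "\<dots> = ln (real (Suc d) / real d)"
        using d1 x by (simp add: ln_div)
      finally show ?thesis using lnq by simp
    next
      case False
      hence "x / real (Suc d) < 1" using x d1 by (metis ln_ge_zero not_less)
      hence "x < real (Suc d)" by (simp add: divide_less_eq)
      hence "u \<le> ln (real (Suc d) / real d)" unfolding u_def using d1 x
        by (intro ln_mono) (auto simp: field_simps)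
      moreover have "v = 0" unfolding v_def using False by simp
      ultimately show ?thesis using lnq by simp
    qed
    have "U d - U (Suc d) = u ^ Suc k - v ^ Suc k" unfolding U_def u_def v_def using u0 u_def by simp
    also have "\<dots> \<le> real (Suc k) * u^k * (u - v)" by (rule powdiff[OF v0 vu])
    also have "\<dots> \<le> real (Suc k) * u^k * (1 / real d)"
      by (rule mult_left_mono[OF uv]) (simp add: u0)
    finally show ?thesis unfolding u_def by simp
  qed
  have "(\<Sum>d\<in>{1..N}. U d - U (Suc d)) = U 1 - U (Suc N)"
  proof -
    have "(\<Sum>d\<in>{1..N}. U (Suc d) - U d) = U (Suc N) - U 1" using N1 by (intro sum_Suc_diff) simp
    hence "- (\<Sum>d\<in>{1..N}. U d - U (Suc d)) = U (Suc N) - U 1" by (simp add: sum_negf[symmetric])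
    thus ?thesis by simp
  qed
  moreover have "U (Suc N) = 0"
  proof -
    have "x / real (Suc N) < 1" using xN by (simp add: divide_less_eq)
    hence "ln (x / real (Suc N)) < 0" using x by (intro ln_less_zero) auto
    thus ?thesis unfolding U_def by simp
  qed
  moreover have "U 1 = ln x ^ Suc k" unfolding U_def using x by simp
  ultimately have "ln x ^ Suc k = (\<Sum>d\<in>{1..N}. U d - U (Suc d))" by simp
  also have "\<dots> \<le> (\<Sum>d\<in>{1..N}. real (Suc k) * (ln (x / real d) ^ k / real d))"
    by (rule sum_mono) (rule step)
  also have "\<dots> = real (Suc k) * (\<Sum>d\<in>{d. 1 \<le> d \<and> real d \<le> x}. ln (x / real d) ^ k / real d)"
  proof -
    have sN: "{d::nat. 1 \<le> d \<and> real d \<le> x} = {1..N}" unfolding N_def using x by (intro setN_eq) simp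
    show ?thesis unfolding sN by (simp add: sum_distrib_left)
  qed
  finally have "ln x ^ Suc k \<le> real (Suc k) * (\<Sum>d\<in>{d. 1 \<le> d \<and> real d \<le> x}. ln (x / real d) ^ k / real d)" .
  thus ?thesis by (subst pos_divide_le_eq) (simp_all add: mult.commute)
qed

abbreviation seedk :: "nat \<Rightarrow> nat \<Rightarrow> nat \<Rightarrow> real" where "seedk k \<equiv> (\<lambda>q. cp (geo q) k)"

lemma seed_bound: "x \<ge> 1 \<Longrightarrow> Sm (seedk k) x \<ge> ln x ^ k / fact k"
proof (induction k arbitrary: x)
  case 0 thus ?case by (simp add: Sm_unit)
next
  case (Suc k)
  have a0: "\<And>q. geo q 0 = 1" by simp
  have b0: "\<And>q. cp (geo q) k 0 = 1" by (simp add: cp_0)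
  have key: "mf (\<lambda>q. lconv (geo q) (cp (geo q) k)) n = (\<Sum>d\<in>{d. d dvd n}. mf geo d * mf (seedk k) (n div d))" if "n > 0" for n
    using dmult[where a = geo and b = "seedk k", OF a0 b0, of n] that by simp
  have "Sm (seedk (Suc k)) x = (\<Sum>n\<in>{n. 1 \<le> n \<and> real n \<le> x}. \<Sum>d\<in>{d. d dvd n}. mf geo d * mf (seedk k) (n div d))"
    unfolding Sm_def by (rule sum.cong) (auto simp: key)
  also have "\<dots> = (\<Sum>d\<in>{d. 1 \<le> d \<and> real d \<le> x}. mf geo d * Sm (seedk k) (x / real d))"
    unfolding sumconv Sm_def ..
  also have "\<dots> \<ge> (\<Sum>d\<in>{d. 1 \<le> d \<and> real d \<le> x}. (1 / real d) * (ln (x / real d) ^ k / fact k))"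
  proof (rule sum_mono)
    fix d assume d: "d \<in> {d. 1 \<le> d \<and> real d \<le> x}"
    hence "x / real d \<ge> 1" by (simp add: le_divide_eq)
    hence "Sm (seedk k) (x / real d) \<ge> ln (x / real d) ^ k / fact k" by (rule Suc.IH)
    thus "(1 / real d) * (ln (x / real d) ^ k / fact k) \<le> mf geo d * Sm (seedk k) (x / real d)"
    proof -
      have "mf geo d = 1 / real d" using d mf_geo by simp
      show ?thesis unfolding \<open>mf geo d = 1 / real d\<close>
        by (rule mult_left_mono[OF \<open>Sm (seedk k) (x / real d) \<ge> ln (x / real d) ^ k / fact k\<close>]) simp
    qed
  qed
  also have "(\<Sum>d\<in>{d. 1 \<le> d \<and> real d \<le> x}. (1 / real d) * (ln (x / real d) ^ k / fact k))
      = (\<Sum>d\<in>{d. 1 \<le> d \<and> real d \<le> x}. ln (x / real d) ^ k / real d) / fact k"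
    by (simp add: sum_divide_distrib)
  also have "\<dots> \<ge> (ln x ^ Suc k / real (Suc k)) / fact k"
    by (rule divide_right_mono[OF tel[OF Suc.prems]]) simp
  also have "(ln x ^ Suc k / real (Suc k)) / fact k = ln x ^ Suc k / fact (Suc k)"
    by (simp add: field_simps)
  finally show ?case .
qed


lemma pw:
  fixes l t A :: real
  assumes t0: "0 \<le> t" and tl: "t \<le> l" and A0: "0 \<le> A"
  shows "(l - t)^m * (l - t - A) \<ge> l^m * (l - real (Suc m) * t - A)"
proof (cases "l - t - A \<ge> 0")
  case True
  have l0: "l \<ge> 0" using t0 tl by linarith
  show ?thesis
  proof (cases m)
    case 0 thus ?thesis by simp
  next
    case (Suc m')
    have pd: "l^m - (l-t)^m \<le> real m * l^m' * t"
      using powdiff[of "l - t" l m'] t0 tl Suc by simp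
    hence B: "(l - t)^m \<ge> l^m - real m * l^m' * t" by linarith
    have "(l - t)^m * (l - t - A) \<ge> (l^m - real m * l^m' * t) * (l - t - A)"
      by (rule mult_right_mono[OF B True])
    moreover have "real m * l^m' * t * (l - t - A) \<le> real m * l^m' * t * l"
      by (rule mult_left_mono) (use t0 A0 l0 in auto)
    moreover have "l^m = l^m' * l" using Suc by simp
    ultimately show ?thesis by (simp add: algebra_simps)
  qed
next
  case False
  have l0: "l \<ge> 0" using t0 tl by linarith
  have "(l - t)^m \<le> l^m" by (rule power_mono) (use t0 tl in auto)
  hence "(l - t)^m * (l - t - A) \<ge> l^m * (l - t - A)"
    using False by (intro mult_right_mono_neg) auto
  moreover have "l^m * (l - t - A) \<ge> l^m * (l - real (Suc m) * t - A)"
  proof (rule mult_left_mono)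
    have "real (Suc m) * t = t + real m * t" by (simp add: algebra_simps)
    moreover have "real m * t \<ge> 0" using t0 by simp
    ultimately show "l - real (Suc m) * t - A \<le> l - t - A" by linarith
  qed (use l0 in simp)
  ultimately show ?thesis by linarith
qed

lemma mix2:
  fixes G :: "real \<Rightarrow> real" and k :: nat
  assumes k: "k \<ge> 1" and c: "c \<ge> 0" and A: "A \<ge> 0" and d: "\<delta> \<ge> 0" and p: "p > 1" and x: "x \<ge> 1"
    and G: "\<And>y. y \<ge> 1 \<Longrightarrow> G y \<ge> c * ln y ^ (k - 1) * (ln y - A) / fact k"
    and G0: "\<And>y. G y \<ge> 0"
  shows "G x + \<delta> * G (x / p) \<ge> (c * (1 + \<delta>)) * ln x ^ (k - 1) * (ln x - (A + real k * (\<delta> / (1 + \<delta>)) * ln p)) / fact k"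
proof -
  define l where "l = ln x"
  define t where "t = ln p"
  define Q where "Q = c * l ^ (k - 1) / fact k"
  have l0: "l \<ge> 0" unfolding l_def using x by simp
  have t0: "t > 0" unfolding t_def using p by simp
  have Q0: "Q \<ge> 0" unfolding Q_def using c l0 by simp
  have Gx: "G x \<ge> Q * (l - A)" using G[OF x] unfolding Q_def l_def by (simp add: field_simps)
  have Gxp: "G (x / p) \<ge> Q * (l - real k * t - A)"
  proof (cases "x / p \<ge> 1")
    case True
    have lnxp: "ln (x / p) = l - t" unfolding l_def t_def using x p by (simp add: ln_div)
    have tl: "t \<le> l" using lnxp True by (metis diff_ge_0_iff_ge ln_ge_zero)
    have "G (x/p) \<ge> c * (l - t) ^ (k - 1) * (l - t - A) / fact k"
      using G[OF True] lnxp by simp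
    moreover have "(l - t) ^ (k - 1) * (l - t - A) \<ge> l ^ (k - 1) * (l - real (Suc (k - 1)) * t - A)"
      by (rule pw) (use t0 tl A in auto)
    moreover have "real (Suc (k - 1)) = real k" using k by simp
    ultimately have "G (x/p) \<ge> c * (l ^ (k - 1) * (l - real k * t - A)) / fact k"
      using c by (smt (verit, ccfv_SIG) divide_right_mono fact_ge_zero mult_left_mono mult.assoc)
    thus ?thesis unfolding Q_def by (simp add: field_simps)
  next
    case False
    hence "x < p" using p by (simp add: le_divide_eq)
    hence "l < t" unfolding l_def t_def using x by simp
    hence "l - real k * t - A \<le> 0" using k t0 A
      by (smt (verit) mult_le_cancel_right1 of_nat_1 of_nat_mono)
    hence "Q * (l - real k * t - A) \<le> 0" using Q0 by (simp add: mult_nonneg_nonpos)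
    thus ?thesis using G0 by (meson order_trans)
  qed
  have "G x + \<delta> * G (x / p) \<ge> Q * (l - A) + \<delta> * (Q * (l - real k * t - A))"
    using Gx Gxp d by (intro add_mono mult_left_mono) auto
  also have "Q * (l - A) + \<delta> * (Q * (l - real k * t - A)) =
      (c * (1 + \<delta>)) * l ^ (k - 1) * (l - (A + real k * (\<delta> / (1 + \<delta>)) * t)) / fact k"
  proof -
    have gen: "W * (l - A) + \<delta> * (W * (l - real k * t - A)) = (W * (1 + \<delta>)) * (l - (A + real k * (\<delta> / (1 + \<delta>)) * t))" for W
      using d by (simp add: field_simps)
    have "(c * (1 + \<delta>)) * l ^ (k - 1) * (l - (A + real k * (\<delta> / (1 + \<delta>)) * t)) / fact k
        = (Q * (1 + \<delta>)) * (l - (A + real k * (\<delta> / (1 + \<delta>)) * t))"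
      unfolding Q_def by simp
    thus ?thesis using gen[of Q] by simp
  qed
  finally show ?thesis unfolding l_def t_def .
qed

lemma bern2:
  fixes x :: real
  assumes "0 \<le> x" "x \<le> 1"
  shows "(1 - x)^n \<le> 1 - real n * x + real n * (real n - 1) / 2 * x^2"
proof (induction n)
  case 0 thus ?case by simp
next
  case (Suc n)
  have "(1 - x)^(Suc n) = (1 - x) * (1 - x)^n" by simp
  also have "\<dots> \<le> (1 - x) * (1 - real n * x + real n * (real n - 1) / 2 * x^2)"
    by (rule mult_left_mono[OF Suc.IH]) (use assms in simp)
  also have "\<dots> = 1 - real (Suc n) * x + real (Suc n) * (real (Suc n) - 1) / 2 * x^2
      - real n * (real n - 1) / 2 * x^3"
    by (simp add: field_simps power2_eq_square power3_eq_cube)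
  also have "\<dots> \<le> 1 - real (Suc n) * x + real (Suc n) * (real (Suc n) - 1) / 2 * x^2"
  proof -
    have "real n * (real n - 1) \<ge> 0" by (cases n) auto
    hence "real n * (real n - 1) / 2 * x^3 \<ge> 0" using assms by simp
    thus ?thesis by linarith
  qed
  finally show ?case .
qed

lemma key_ineq:
  fixes p :: real and k :: nat
  assumes k: "k \<ge> 1" and p: "p \<ge> 2 * real k"
  shows "(1 - 1/p)^k \<le> (1 + real k^2 / p^2) * (1 - real k / p)"
proof -
  define x where "x = 1 / p"
  have p0: "p > 0" using p k by simp
  have x0: "0 \<le> x" and x1: "x \<le> 1" unfolding x_def using p k by (auto simp: field_simps)
  have xk: "real k * x \<le> 1/2" unfolding x_def using p p0 by (simp add: field_simps)
  have "(1 - x)^k \<le> 1 - real k * x + real k * (real k - 1) / 2 * x^2" by (rule bern2[OF x0 x1])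
  also have "\<dots> \<le> (1 + real k^2 * x^2) * (1 - real k * x)"
  proof -
    have "real k^2 * x^2 * (real k * x) \<le> real k^2 * x^2 * (1/2)"
      by (rule mult_left_mono[OF xk]) simp
    moreover have "real k * (real k - 1) / 2 * x^2 \<le> real k^2 * x^2 / 2"
    proof -
      have "real k * (real k - 1) \<le> real k^2" by (simp add: power2_eq_square algebra_simps)
      hence "real k * (real k - 1) * (x^2 / 2) \<le> real k^2 * (x^2 / 2)"
        by (rule mult_right_mono) simp
      thus ?thesis by simp
    qed
    ultimately have h: "real k * (real k - 1) / 2 * x^2 \<le> real k^2 * x^2 - real k^2 * x^2 * (real k * x)"
      by linarith
    have "(1 + real k^2 * x^2) * (1 - real k * x) = 1 - real k * x + (real k^2 * x^2 - real k^2 * x^2 * (real k * x))"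
      by (simp add: algebra_simps)
    thus ?thesis using h by linarith
  qed
  finally show ?thesis unfolding x_def by (simp add: power_divide)
qed

lemma sum2:
  fixes G :: "real \<Rightarrow> real"
  assumes p: "prime (p::nat)" and t0: "t 0 = 1" and t2: "\<And>j. j \<ge> 2 \<Longrightarrow> t j = 0"
    and x: "x \<ge> 1" and G: "\<And>y. y < 1 \<Longrightarrow> G y = 0"
  shows "(\<Sum>j\<in>{j. real (p^j) \<le> x}. t j * G (x / real (p^j))) = G x + t 1 * G (x / real p)"
proof -
  let ?J = "{j. real (p^j) \<le> x}"
  let ?f = "\<lambda>j. t j * G (x / real (p^j))"
  have fin: "finite (?J \<union> {0,1})" using fin_pow[OF p] by simp
  have z1: "\<forall>j\<in>(?J \<union> {0,1}) - ?J. ?f j = 0"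
  proof
    fix j assume j: "j \<in> (?J \<union> {0,1}) - ?J"
    hence j1: "j = 1" using x by auto
    hence "real p > x" using j by auto
    hence "x / real p < 1" using p by (simp add: divide_less_eq)
    thus "?f j = 0" using G j1 by simp
  qed
  have z2: "\<forall>j\<in>(?J \<union> {0,1}) - {0,1}. ?f j = 0"
  proof
    fix j assume j: "j \<in> (?J \<union> {0,1}) - {0,1}"
    hence "j \<ge> 2" by auto
    thus "?f j = 0" using t2 by simp
  qed
  have "(\<Sum>j\<in>?J. ?f j) = (\<Sum>j\<in>?J \<union> {0,1}. ?f j)"
    by (rule sum.mono_neutral_left[OF fin _ z1]) auto
  also have "\<dots> = (\<Sum>j\<in>{0,1}. ?f j)"
    by (rule sum.mono_neutral_right[OF fin _ z2]) auto
  also have "\<dots> = G x + t 1 * G (x / real p)" using t0 by simp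
  finally show ?thesis .
qed


definition tgt :: "real \<Rightarrow> nat \<Rightarrow> real" where
  "tgt g e = (if e = 0 then 1 else if e = 1 then g else 0)"

lemma tgt_0 [simp]: "tgt g 0 = 1" by (simp add: tgt_def)
lemma tgt_1 [simp]: "tgt g (Suc 0) = g" by (simp add: tgt_def)
lemma tgt_2: "j \<ge> 2 \<Longrightarrow> tgt g j = 0" by (simp add: tgt_def)
lemma tgt_nonneg: "g \<ge> 0 \<Longrightarrow> tgt g j \<ge> 0" by (simp add: tgt_def)
lemma tgt_partial: "g \<ge> 0 \<Longrightarrow> (\<Sum>j<n. tgt g j) \<le> 1 + g"
proof -
  assume g: "g \<ge> 0"
  have "(\<Sum>j<n. tgt g j) \<le> (\<Sum>j\<in>{0,1}. tgt g j)"
  proof -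
    have "(\<Sum>j<n. tgt g j) = (\<Sum>j\<in>{..<n} \<inter> {0,1}. tgt g j)"
      by (rule sum.mono_neutral_right) (auto simp: tgt_def)
    also have "\<dots> \<le> (\<Sum>j\<in>{0,1}. tgt g j)"
      by (rule sum_mono2) (auto simp: tgt_nonneg g)
    finally show ?thesis .
  qed
  thus ?thesis by simp
qed

lemma seed_partial: "q \<ge> 2 \<Longrightarrow> (\<Sum>j<n. cp (geo q) k j) \<le> (real q / (real q - 1))^k"
  by (rule cp_partial[OF geo_nonneg geo_partial])

lemma W_eq: "real p \<ge> 2 \<Longrightarrow> (real p / (real p - 1))^k = 1 / (1 - 1 / real p)^k"
proof -
  assume p: "real p \<ge> 2"
  have "real p / (real p - 1) = 1 / (1 - 1 / real p)" using p by (simp add: field_simps)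
  thus ?thesis by (simp add: power_one_over)
qed

locale stepctx =
  fixes l :: "nat \<Rightarrow> nat \<Rightarrow> real" and p k :: nat and c A :: real
  assumes p: "prime p"
    and l0: "\<And>q. l q 0 = 1" and lnn: "\<And>q e. l q e \<ge> 0"
    and lp: "l p = cp (geo p) k" and k: "k \<ge> 1" and c: "c \<ge> 0" and A: "A \<ge> 0"
    and inv: "\<And>y. y \<ge> 1 \<Longrightarrow> Sm l y \<ge> c * ln y ^ (k - 1) * (ln y - A) / fact k"
begin

abbreviation "F \<equiv> Sm (l(p := unitc))"
abbreviation "W \<equiv> (real p / (real p - 1))^k"

lemma p2: "p \<ge> 2" using prime_ge_2_nat[OF p] .
lemma rp2: "real p \<ge> 2" using p2 by simp

lemma Fnn0: "\<And>q e. (l(p := unitc)) q e \<ge> 0" using lnn unitc_nonneg by simp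
lemma F0: "F y \<ge> 0" by (rule Sm_nonneg[OF Fnn0])
lemma Fmono: "y \<le> y' \<Longrightarrow> F y \<le> F y'" by (rule Sm_mono[OF Fnn0])
lemma Fsmall: "y < 1 \<Longrightarrow> F y = 0" by (rule Sm_small)
lemma Snn: "Sm l y \<ge> 0" by (rule Sm_nonneg[OF lnn])

lemma W_pos: "W > 0" using rp2 by simp

lemma sum_le_W:
  assumes "finite J" shows "(\<Sum>j\<in>J. cp (geo p) k j) \<le> W"
  by (rule partial_to_set[OF cp_nonneg[OF geo_nonneg] seed_partial[OF p2] assms])

lemma Sm_le_WF: "Sm l y \<le> W * F y"
proof -
  have eq: "l = l(p := lconv (cp (geo p) k) unitc)" using lp by auto
  have "Sm l y = (\<Sum>j\<in>{j. real (p^j) \<le> y}. cp (geo p) k j * F (y / real (p^j)))"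
    by (subst eq, rule split_sum[OF p]) (auto simp: l0 cp_0)
  also have "\<dots> \<le> (\<Sum>j\<in>{j. real (p^j) \<le> y}. cp (geo p) k j * F y)"
  proof (rule sum_mono)
    fix j assume "j \<in> {j. real (p^j) \<le> y}"
    hence y0: "y \<ge> 0" by (meson of_nat_0_le_iff order_trans mem_Collect_eq)
    have "real (p^j) \<ge> 1" using p2 by simp
    hence "y / real (p^j) \<le> y" using y0 by (simp add: divide_le_eq mult_le_cancel_left1)
    thus "cp (geo p) k j * F (y / real (p^j)) \<le> cp (geo p) k j * F y"
      by (intro mult_left_mono Fmono) (auto intro: cp_nonneg geo_nonneg)
  qed
  also have "\<dots> = (\<Sum>j\<in>{j. real (p^j) \<le> y}. cp (geo p) k j) * F y" by (simp add: sum_distrib_right)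
  also have "\<dots> \<le> W * F y"
    by (rule mult_right_mono[OF sum_le_W[OF fin_pow[OF p]] F0])
  finally show ?thesis .
qed

lemma F_lower: "y \<ge> 1 \<Longrightarrow> F y \<ge> (c / W) * ln y ^ (k - 1) * (ln y - A) / fact k"
proof -
  assume y: "y \<ge> 1"
  have h: "c * ln y ^ (k - 1) * (ln y - A) / fact k \<le> F y * W" using inv[OF y] Sm_le_WF[of y] by (simp add: mult.commute)
  have "(c * ln y ^ (k - 1) * (ln y - A) / fact k) / W \<le> F y"
    by (subst pos_divide_le_eq[OF W_pos]) (rule h)
  moreover have "(c / W) * ln y ^ (k - 1) * (ln y - A) / fact k = (c * ln y ^ (k - 1) * (ln y - A) / fact k) / W" by simp
  ultimately show ?thesis by (simp add: mult.commute)
qed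

lemma new_eq:
  assumes x: "x \<ge> 1"
  shows "Sm (l(p := tgt g)) x = F x + g * F (x / real p)"
proof -
  have "Sm (l(p := tgt g)) x = Sm (l(p := lconv (tgt g) unitc)) x" by simp
  also have "\<dots> = (\<Sum>j\<in>{j. real (p^j) \<le> x}. tgt g j * F (x / real (p^j)))"
    by (rule split_sum[OF p]) (auto simp: l0)
  also have "\<dots> = F x + tgt g 1 * F (x / real p)"
    by (rule sum2[OF p]) (auto simp: tgt_2 x Sm_small)
  finally show ?thesis by simp
qed

lemma step_small:
  fixes w :: real
  assumes w0: "0 \<le> w" and wp: "w < real p" and x: "x \<ge> 1"
  shows "Sm (l(p := tgt (w / (real p - w)))) x \<ge>
    (c * ((1 - 1 / real p)^k / (1 - w / real p))) * ln x ^ (k - 1) * (ln x - (A + real k * (w / real p) * ln p)) / fact k"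
proof -
  define g where "g = w / (real p - w)"
  have g0: "g \<ge> 0" unfolding g_def using w0 wp by simp
  have cW: "c / W \<ge> 0" using c W_pos by simp
  have "Sm (l(p := tgt g)) x = F x + g * F (x / real p)" by (rule new_eq[OF x])
  also have "\<dots> \<ge> (c / W * (1 + g)) * ln x ^ (k - 1) * (ln x - (A + real k * (g / (1 + g)) * ln (real p))) / fact k"
    by (rule mix2[OF k cW A g0 _ x F_lower F0]) (use rp2 in simp)
  finally have main: "Sm (l(p := tgt g)) x \<ge> (c / W * (1 + g)) * ln x ^ (k - 1) * (ln x - (A + real k * (g / (1 + g)) * ln (real p))) / fact k" .
  have e1: "g / (1 + g) = w / real p" unfolding g_def using wp w0 by (simp add: field_simps)
  have e2: "c / W * (1 + g) = c * ((1 - 1 / real p)^k / (1 - w / real p))"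
  proof -
    have "1 + g = 1 / (1 - w / real p)" unfolding g_def using wp w0 rp2 by (simp add: field_simps)
    moreover have "1 / W = (1 - 1 / real p)^k" using W_eq[OF rp2] by simp
    moreover have "c / W = c * (1 / W)" by simp
    ultimately show ?thesis by simp
  qed
  have "(c / W * (1 + g)) * ln x ^ (k - 1) * (ln x - (A + real k * (g / (1 + g)) * ln (real p))) / fact k
     = (c * ((1 - 1 / real p)^k / (1 - w / real p))) * ln x ^ (k - 1) * (ln x - (A + real k * (w / real p) * ln p)) / fact k"
    by (simp only: e1 e2)
  thus ?thesis using main unfolding g_def by simp
qed

end


context stepctx begin

lemma step_large:
  fixes w :: real
  assumes w0: "0 \<le> w" and wk: "w \<le> real k" and pk: "real p \<ge> 2 * real k" and x: "x \<ge> 1"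
  shows "Sm (l(p := tgt (w / (real p - w)))) x \<ge>
    (c * ((1 - 1 / real p)^k / (1 - w / real p))) * ln x ^ (k - 1) *
      (ln x - (A + real k * ((real k^2 / real p^2) / (1 + real k^2 / real p^2)) * ln p)) / fact k"
proof -
  define \<delta> where "\<delta> = real k^2 / real p^2"
  define g where "g = w / (real p - w)"
  define I where "I = lconv (tgt \<delta>) (cp (geo p) k)"
  define T where "T = (1 + \<delta>) * W"
  have kp: "real k < real p" using pk k by linarith
  have wp: "w < real p" using wk kp by linarith
  have d0: "\<delta> \<ge> 0" unfolding \<delta>_def by simp
  have g0: "g \<ge> 0" unfolding g_def using w0 wp by simp
  have Inn: "I j \<ge> 0" for j unfolding I_def
    by (rule lconv_nonneg) (auto intro: tgt_nonneg d0 cp_nonneg geo_nonneg)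
  have I0: "I 0 = 1" unfolding I_def by (simp add: cp_0)
  have T0: "T > 0" unfolding T_def using d0 W_pos by simp
  have SI_eq: "Sm (l(p := I)) x = Sm l x + \<delta> * Sm l (x / real p)"
  proof -
    have e: "l(p := cp (geo p) k) = l" using lp by auto
    have s1: "Sm (l(p := I)) x = (\<Sum>j\<in>{j. real (p^j) \<le> x}. tgt \<delta> j * Sm (l(p := cp (geo p) k)) (x / real (p^j)))"
      unfolding I_def by (rule split_sum[OF p]) (auto simp: l0 cp_0)
    have s2: "(\<Sum>j\<in>{j. real (p^j) \<le> x}. tgt \<delta> j * Sm l (x / real (p^j))) = Sm l x + tgt \<delta> 1 * Sm l (x / real p)"
      by (rule sum2[OF p]) (auto simp: tgt_2 x Sm_small)
    show ?thesis using s1 s2 unfolding e by simp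
  qed
  have SI_low: "Sm (l(p := I)) x \<ge> (c * (1 + \<delta>)) * ln x ^ (k - 1) * (ln x - (A + real k * (\<delta> / (1 + \<delta>)) * ln (real p))) / fact k"
    unfolding SI_eq by (rule mix2[OF k c A d0 _ x inv Snn]) (use rp2 in simp)
  have SI_up: "Sm (l(p := I)) x \<le> F x + (T - 1) * F (x / real p)"
  proof -
    let ?J = "{j. real (p^j) \<le> x}"
    have finJ: "finite ?J" by (rule fin_pow[OF p])
    have J0: "0 \<in> ?J" using x by simp
    have partI: "(\<Sum>j<n. I j) \<le> T" for n
    proof -
      have "(\<Sum>j<n. I j) \<le> (\<Sum>j<n. tgt \<delta> j) * (\<Sum>j<n. cp (geo p) k j)"
        unfolding I_def by (rule conv_partial) (auto intro: tgt_nonneg d0 cp_nonneg geo_nonneg)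
      also have "\<dots> \<le> (1 + \<delta>) * W"
        by (rule mult_mono[OF tgt_partial[OF d0] seed_partial[OF p2]]) (use d0 in \<open>simp_all add: sum_nonneg cp_nonneg geo_nonneg\<close>)
      finally show ?thesis unfolding T_def .
    qed
    have sumJ: "(\<Sum>j\<in>?J. I j) \<le> T" by (rule partial_to_set[OF Inn partI finJ])
    have "Sm (l(p := I)) x = Sm (l(p := lconv I unitc)) x" by simp
    also have "\<dots> = (\<Sum>j\<in>?J. I j * F (x / real (p^j)))"
      by (rule split_sum[OF p]) (auto simp: l0 I0)
    also have "\<dots> = I 0 * F (x / real (p^0)) + (\<Sum>j\<in>?J - {0}. I j * F (x / real (p^j)))"
      by (rule sum.remove[OF finJ J0])
    finally have sp: "Sm (l(p := I)) x = F x + (\<Sum>j\<in>?J - {0}. I j * F (x / real (p^j)))"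
      using I0 by simp
    have b1: "(\<Sum>j\<in>?J - {0}. I j * F (x / real (p^j))) \<le> (\<Sum>j\<in>?J - {0}. I j * F (x / real p))"
    proof (rule sum_mono)
      fix j assume "j \<in> ?J - {0}"
      hence j1: "j \<ge> 1" by simp
      have "p \<le> p^j" using j1 p2 by (simp add: self_le_power)
      hence "real p \<le> real (p^j)" by (simp only: of_nat_le_iff)
      hence "x / real (p^j) \<le> x / real p" using x rp2 by (intro divide_left_mono) auto
      thus "I j * F (x / real (p^j)) \<le> I j * F (x / real p)"
        by (intro mult_left_mono Fmono Inn)
    qed
    have b2: "(\<Sum>j\<in>?J - {0}. I j * F (x / real p)) = (\<Sum>j\<in>?J - {0}. I j) * F (x / real p)"
      by (simp add: sum_distrib_right)
    have b3: "(\<Sum>j\<in>?J - {0}. I j) = (\<Sum>j\<in>?J. I j) - 1"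
      using sum.remove[OF finJ J0, of I] I0 by simp
    have b4: "((\<Sum>j\<in>?J. I j) - 1) * F (x / real p) \<le> (T - 1) * F (x / real p)"
      by (rule mult_right_mono) (use sumJ F0 in auto)
    have b5: "(\<Sum>j\<in>?J - {0}. I j) * F (x / real p) \<le> (T - 1) * F (x / real p)"
      using b3 b4 by simp
    show ?thesis using sp b1 b2 b5 by linarith
  qed
  have cond: "1 + g \<le> T"
  proof -
    have p0: "real p > 0" using rp2 by simp
    have q0: "1 - w / real p > 0" using wp p0 by (simp add: field_simps)
    have r0: "(1 - 1 / real p)^k > 0" using rp2 by simp
    have "(1 - 1 / real p)^k \<le> (1 + \<delta>) * (1 - real k / real p)"
      unfolding \<delta>_def using key_ineq[OF k pk] by (simp add: power_divide)
    also have "\<dots> \<le> (1 + \<delta>) * (1 - w / real p)"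
      using wk p0 d0 by (intro mult_left_mono) (auto simp: divide_right_mono)
    finally have h: "(1 - 1 / real p)^k \<le> (1 + \<delta>) * (1 - w / real p)" .
    have "1 + g = 1 / (1 - w / real p)" unfolding g_def using wp p0 by (simp add: field_simps)
    also have "\<dots> \<le> (1 + \<delta>) / (1 - 1 / real p)^k"
      using h q0 r0 by (simp add: divide_simps mult.commute)
    also have "\<dots> = T" unfolding T_def using W_eq[OF rp2] by simp
    finally show ?thesis .
  qed
  have "Sm (l(p := tgt g)) x = F x + g * F (x / real p)" by (rule new_eq[OF x])
  also have "\<dots> \<ge> ((1 + g) / T) * (F x + (T - 1) * F (x / real p))"
  proof -
    have mono: "F (x / real p) \<le> F x" using rp2 x by (intro Fmono) (simp add: divide_le_eq)
    have fac: "1 - (1 + g) / T \<ge> 0" using cond T0 by (simp add: divide_le_eq)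
    have "F x + g * F (x / real p) - ((1 + g) / T) * (F x + (T - 1) * F (x / real p))
        = (F x - F (x / real p)) * (1 - (1 + g) / T)"
      using T0 by (simp add: field_simps)
    also have "\<dots> \<ge> 0" using mono fac by simp
    finally show ?thesis by simp
  qed
  finally have new1: "Sm (l(p := tgt g)) x \<ge> ((1 + g) / T) * (F x + (T - 1) * F (x / real p))" .
  have gT: "(1 + g) / T \<ge> 0" using g0 T0 by simp
  have "Sm (l(p := tgt g)) x \<ge> ((1 + g) / T) * Sm (l(p := I)) x"
    using new1 mult_left_mono[OF SI_up gT] by linarith
  moreover have "((1 + g) / T) * Sm (l(p := I)) x \<ge>
     ((1 + g) / T) * ((c * (1 + \<delta>)) * ln x ^ (k - 1) * (ln x - (A + real k * (\<delta> / (1 + \<delta>)) * ln (real p))) / fact k)"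
    by (rule mult_left_mono[OF SI_low gT])
  moreover have "((1 + g) / T) * ((c * (1 + \<delta>)) * ln x ^ (k - 1) * (ln x - (A + real k * (\<delta> / (1 + \<delta>)) * ln (real p))) / fact k)
     = (c * ((1 - 1 / real p)^k / (1 - w / real p))) * ln x ^ (k - 1) * (ln x - (A + real k * (\<delta> / (1 + \<delta>)) * ln (real p))) / fact k"
  proof -
    have "(1 + g) / T * (c * (1 + \<delta>)) = c * ((1 - 1 / real p)^k / (1 - w / real p))"
    proof -
      have "1 + g = 1 / (1 - w / real p)" unfolding g_def using wp rp2 by (simp add: field_simps)
      moreover have "1 / W = (1 - 1 / real p)^k" using W_eq[OF rp2] by simp
      moreover have "(1 + g) / T * (c * (1 + \<delta>)) = c * (1 / W) * (1 + g)"
      proof -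
        have alg: "(b / (a * V)) * (c * a) = c * (1 / V) * b" if "a > 0" "V > 0" for a b V :: real
          using that by (simp add: field_simps)
        show ?thesis unfolding T_def by (rule alg) (use d0 W_pos in auto)
      qed
      ultimately show ?thesis by simp
    qed
    note hh = this
    have gen2: "\<alpha> * (\<beta> * L * M / f) = (\<alpha> * \<beta>) * L * M / f" for \<alpha> \<beta> L M f :: real by simp
    show ?thesis by (simp only: gen2 hh)
  qed
  ultimately show ?thesis unfolding g_def \<delta>_def by simp
qed

end


locale procctx =
  fixes k :: nat and \<omega> :: "nat \<Rightarrow> nat"
  assumes k: "k \<ge> 1"
    and wlt: "\<And>p. prime p \<Longrightarrow> \<omega> p < p"
    and wle: "\<And>p. prime p \<Longrightarrow> \<omega> p \<le> k"
begin

definition gw :: "nat \<Rightarrow> real" where "gw p = real (\<omega> p) / (real p - real (\<omega> p))"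
definition lamP :: "nat set \<Rightarrow> nat \<Rightarrow> nat \<Rightarrow> real" where
  "lamP P = (\<lambda>q. if q \<in> P then tgt (gw q) else cp (geo q) k)"
definition loc :: "nat \<Rightarrow> real" where "loc p = (1 - 1 / real p)^k / (1 - real (\<omega> p) / real p)"
definition err :: "nat \<Rightarrow> real" where
  "err p = (if 2 * real k \<le> real p then real k * ((real k^2 / real p^2) / (1 + real k^2 / real p^2)) * ln p
            else real k * (real (\<omega> p) / real p) * ln p)"

lemma gw_nonneg: "prime p \<Longrightarrow> gw p \<ge> 0"
  unfolding gw_def using wlt[of p] by simp

lemma loc_pos: "prime p \<Longrightarrow> loc p > 0"
proof -
  assume p: "prime p"
  have p2: "real p \<ge> 2" using prime_ge_2_nat[OF p] by simp
  have "real (\<omega> p) < real p" using wlt[OF p] by simp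
  hence "real (\<omega> p) / real p < 1" using p2 by simp
  moreover have "1 / real p < 1" using p2 by simp
  ultimately show ?thesis unfolding loc_def by simp
qed

lemma err_nonneg: "prime p \<Longrightarrow> err p \<ge> 0"
proof -
  assume p: "prime p"
  have p2: "real p \<ge> 2" using prime_ge_2_nat[OF p] by simp
  hence "ln (real p) \<ge> 0" by simp
  thus ?thesis unfolding err_def by simp
qed

lemma lamP_0: "prime q \<Longrightarrow> True" by simp

lemma main_induct:
  assumes fin: "finite P" and pr: "\<forall>p\<in>P. prime p"
  shows "\<forall>x\<ge>1. Sm (lamP P) x \<ge> (\<Prod>p\<in>P. loc p) * ln x ^ (k - 1) * (ln x - (\<Sum>p\<in>P. err p)) / fact k"
  using fin pr
proof (induction P rule: finite_induct)
  case empty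
  have "lamP {} = seedk k" unfolding lamP_def by simp
  moreover have pw: "ln x ^ k = ln x ^ (k - 1) * ln x" for x using k
    by (metis Suc_diff_le diff_Suc_1 power_Suc2)
  ultimately show ?case
  proof (intro allI impI)
    fix x :: real assume x: "x \<ge> 1"
    have "Sm (seedk k) x \<ge> ln x ^ k / fact k" by (rule seed_bound[OF x])
    thus "Sm (lamP {}) x \<ge> (\<Prod>p\<in>{}. loc p) * ln x ^ (k - 1) * (ln x - (\<Sum>p\<in>{}. err p)) / fact k"
      using \<open>lamP {} = seedk k\<close> pw[of x] by simp
  qed
next
  case (insert p P)
  have p: "prime p" using insert.prems by simp
  have prP: "\<forall>q\<in>P. prime q" using insert.prems by simp
  define c where "c = (\<Prod>q\<in>P. loc q)"
  define A where "A = (\<Sum>q\<in>P. err q)"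
  have c0: "c \<ge> 0" unfolding c_def using prP loc_pos by (intro prod_nonneg) (auto intro: less_imp_le)
  have A0: "A \<ge> 0" unfolding A_def using prP err_nonneg by (intro sum_nonneg) auto
  have IH: "\<And>y. y \<ge> 1 \<Longrightarrow> Sm (lamP P) y \<ge> c * ln y ^ (k - 1) * (ln y - A) / fact k"
    using insert.IH[OF prP] unfolding c_def A_def by simp
  interpret S: stepctx "lamP P" p k c A
  proof
    show "prime p" by (rule p)
    show "\<And>q. lamP P q 0 = 1" unfolding lamP_def by (simp add: cp_0)
    show "\<And>q e. lamP P q e \<ge> 0" unfolding lamP_def using prP
      by (auto intro!: tgt_nonneg gw_nonneg cp_nonneg geo_nonneg)
    show "lamP P p = cp (geo p) k" unfolding lamP_def using insert.hyps by simp
  qed (use k c0 A0 IH in auto)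
  have upd: "lamP (insert p P) = (lamP P)(p := tgt (real (\<omega> p) / (real p - real (\<omega> p))))"
    unfolding lamP_def gw_def by auto
  have prodI: "(\<Prod>q\<in>insert p P. loc q) = c * loc p" unfolding c_def using insert.hyps by (simp add: mult.commute)
  have sumI: "(\<Sum>q\<in>insert p P. err q) = A + err p" unfolding A_def using insert.hyps by (simp add: add.commute)
  show ?case
  proof (intro allI impI)
    fix x :: real assume x: "x \<ge> 1"
    have w0: "0 \<le> real (\<omega> p)" by simp
    have "Sm (lamP (insert p P)) x \<ge> (c * loc p) * ln x ^ (k - 1) * (ln x - (A + err p)) / fact k"
    proof (cases "2 * real k \<le> real p")
      case True
      have "Sm (lamP (insert p P)) x \<ge> (c * ((1 - 1 / real p)^k / (1 - real (\<omega> p) / real p))) * ln x ^ (k - 1) *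
        (ln x - (A + real k * ((real k^2 / real p^2) / (1 + real k^2 / real p^2)) * ln p)) / fact k"
        unfolding upd by (rule S.step_large[OF w0 _ True x]) (use wle[OF p] in simp)
      thus ?thesis unfolding loc_def err_def using True by simp
    next
      case False
      have "Sm (lamP (insert p P)) x \<ge> (c * ((1 - 1 / real p)^k / (1 - real (\<omega> p) / real p))) * ln x ^ (k - 1) *
        (ln x - (A + real k * (real (\<omega> p) / real p) * ln p)) / fact k"
        unfolding upd by (rule S.step_small[OF w0 _ x]) (use wlt[OF p] in simp)
      thus ?thesis unfolding loc_def err_def using False by simp
    qed
    thus "Sm (lamP (insert p P)) x \<ge> (\<Prod>q\<in>insert p P. loc q) * ln x ^ (k - 1) * (ln x - (\<Sum>q\<in>insert p P. err q)) / fact k"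
      unfolding prodI sumI .
  qed
qed

end


definition gt :: "nat \<Rightarrow> real" where "gt n = (2 + ln (real n)) / real n"

lemma tele:
  assumes n: "n \<ge> 2"
  shows "ln (real n) / (real n)^2 \<le> gt (n - 1) - gt n"
proof -
  define a where "a = real n"
  have a2: "a \<ge> 2" unfolding a_def using n by simp
  have rn1: "real (n - 1) = a - 1" unfolding a_def using n by simp
  have lnd: "ln a - ln (a - 1) \<le> 1 / (a - 1)"
  proof -
    have "ln (a / (a - 1)) \<le> a / (a - 1) - 1" using a2 by (intro ln_le_minus_one) auto
    moreover have "ln (a / (a - 1)) = ln a - ln (a - 1)" using a2 by (simp add: ln_div)
    moreover have "a / (a - 1) - 1 = 1 / (a - 1)" using a2 by (simp add: field_simps)
    ultimately show ?thesis by simp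
  qed
  have h2: "a * (ln a - ln (a - 1)) \<le> 2"
  proof -
    have "a * (ln a - ln (a - 1)) \<le> a * (1 / (a - 1))" using lnd a2 by (intro mult_left_mono) auto
    also have "\<dots> \<le> 2" using a2 by (simp add: field_simps)
    finally show ?thesis .
  qed
  have la: "ln a \<ge> 0" using a2 by simp
  have "gt (n - 1) - gt n = (2 + ln (a - 1)) / (a - 1) - (2 + ln a) / a"
    unfolding gt_def rn1 a_def by simp
  also have "\<dots> = (2 + ln a - a * (ln a - ln (a - 1))) / (a * (a - 1))"
    using a2 by (simp add: field_simps)
  also have "\<dots> \<ge> ln a / (a * (a - 1))"
    using h2 a2 by (intro divide_right_mono) auto
  also have "ln a / (a * (a - 1)) \<ge> ln a / a^2"
    using a2 la by (intro divide_left_mono) (auto simp: power2_eq_square)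
  finally show ?thesis unfolding a_def by simp
qed

lemma gt_nonneg: "n \<ge> 1 \<Longrightarrow> gt n \<ge> 0"
  unfolding gt_def by simp

lemma tele_sum:
  assumes N: "N \<ge> 1"
  shows "(\<Sum>n\<in>{Suc N..N + d}. ln (real n) / (real n)^2) \<le> gt N - gt (N + d)"
proof (induction d)
  case 0 thus ?case by simp
next
  case (Suc d)
  have "(\<Sum>n\<in>{Suc N..N + Suc d}. ln (real n) / (real n)^2) =
        (\<Sum>n\<in>{Suc N..N + d}. ln (real n) / (real n)^2) + ln (real (Suc (N + d))) / (real (Suc (N + d)))^2"
    by (simp add: add_Suc_right)
  also have "\<dots> \<le> gt N - gt (N + d) + (gt (Suc (N + d) - 1) - gt (Suc (N + d)))"
    using Suc.IH tele[of "Suc (N + d)"] N by linarith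
  finally show ?case by simp
qed

lemma tele_bound:
  assumes N: "N \<ge> 1"
  shows "(\<Sum>n\<in>{Suc N..M}. ln (real n) / (real n)^2) \<le> gt N"
proof (cases "M \<le> N")
  case True thus ?thesis using gt_nonneg[OF N] by simp
next
  case False
  then obtain d where M: "M = N + d" by (metis le_add_diff_inverse nat_le_linear)
  have "(\<Sum>n\<in>{Suc N..M}. ln (real n) / (real n)^2) \<le> gt N - gt (N + d)" unfolding M by (rule tele_sum[OF N])
  also have "\<dots> \<le> gt N" using gt_nonneg[of "N + d"] N by simp
  finally show ?thesis .
qed

context procctx begin

lemma err_small: "prime p \<Longrightarrow> real p < 2 * real k \<Longrightarrow> err p \<le> real k * ln (2 * real k)"
proof -
  assume p: "prime p" and pk: "real p < 2 * real k"
  have p2: "real p \<ge> 2" using prime_ge_2_nat[OF p] by simp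
  have "real (\<omega> p) / real p \<le> 1" using wlt[OF p] p2 by simp
  moreover have "ln (real p) \<ge> 0" using p2 by simp
  ultimately have "real k * (real (\<omega> p) / real p) * ln p \<le> real k * 1 * ln p"
    by (intro mult_right_mono mult_left_mono) auto
  also have "\<dots> \<le> real k * ln (2 * real k)"
  proof -
    have "ln (real p) \<le> ln (2 * real k)" using pk p2 by simp
    thus ?thesis by (simp add: mult_left_mono)
  qed
  finally show ?thesis unfolding err_def using pk by simp
qed

lemma err_large: "prime p \<Longrightarrow> 2 * real k \<le> real p \<Longrightarrow> err p \<le> real k^3 * (ln (real p) / (real p)^2)"
proof -
  assume p: "prime p" and pk: "2 * real k \<le> real p"
  have p2: "real p \<ge> 2" using prime_ge_2_nat[OF p] by simp
  have lp: "ln (real p) \<ge> 0" using p2 by simp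
  define d where "d = real k^2 / real p^2"
  have d0: "d \<ge> 0" unfolding d_def by simp
  have "d / (1 + d) \<le> d" using d0 by (simp add: divide_le_eq algebra_simps)
  hence "real k * (d / (1 + d)) * ln p \<le> real k * d * ln p"
    using lp by (intro mult_right_mono mult_left_mono) auto
  also have "real k * d * ln p = real k^3 * (ln (real p) / (real p)^2)"
    unfolding d_def by (simp add: power3_eq_cube power2_eq_square)
  finally show ?thesis unfolding err_def d_def using pk by simp
qed

lemma err_sum_bound:
  assumes fin: "finite P" and pr: "\<forall>p\<in>P. prime p"
  shows "(\<Sum>p\<in>P. err p) \<le> real k^2 * (5 + 3 * ln (real k))"
proof -
  define Ps where "Ps = {p\<in>P. real p < 2 * real k}"
  define Pl where "Pl = {p\<in>P. \<not> real p < 2 * real k}"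
  have finS: "finite Ps" "finite Pl" using fin unfolding Ps_def Pl_def by auto
  have split: "(\<Sum>p\<in>P. err p) = (\<Sum>p\<in>Ps. err p) + (\<Sum>p\<in>Pl. err p)"
  proof -
    have "P = Ps \<union> Pl" unfolding Ps_def Pl_def by auto
    moreover have "Ps \<inter> Pl = {}" unfolding Ps_def Pl_def by auto
    ultimately show ?thesis using sum.union_disjoint[OF finS] by simp
  qed
  have k1: "real k \<ge> 1" using k by simp
  have cardS: "card Ps \<le> 2 * k"
  proof -
    have "Ps \<subseteq> {..<2 * k}" unfolding Ps_def by auto
    hence "card Ps \<le> card {..<2 * k}" by (rule card_mono[rotated]) simp
    thus ?thesis by simp
  qed
  have S1: "(\<Sum>p\<in>Ps. err p) \<le> 2 * real k^2 * ln (2 * real k)"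
  proof -
    have "(\<Sum>p\<in>Ps. err p) \<le> (\<Sum>p\<in>Ps. real k * ln (2 * real k))"
      by (rule sum_mono) (use pr err_small in \<open>auto simp: Ps_def\<close>)
    also have "\<dots> = real (card Ps) * (real k * ln (2 * real k))" by simp
    also have "\<dots> \<le> real (2 * k) * (real k * ln (2 * real k))"
      using cardS k1 by (intro mult_right_mono) auto
    also have "\<dots> = 2 * real k^2 * ln (2 * real k)" by (simp add: power2_eq_square)
    finally show ?thesis .
  qed
  have S2: "(\<Sum>p\<in>Pl. err p) \<le> real k^2 * (2 + ln (2 * real k))"
  proof -
    define M where "M = Max (insert 0 Pl)"
    have sub: "Pl \<subseteq> {Suc (2 * k - 1)..M}"
    proof
      fix p assume pP: "p \<in> Pl"
      hence "2 * k \<le> p" unfolding Pl_def by auto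
      moreover have "p \<le> M" unfolding M_def using finS(2) pP by (intro Max_ge) auto
      ultimately show "p \<in> {Suc (2 * k - 1)..M}" using k by auto
    qed
    have "(\<Sum>p\<in>Pl. err p) \<le> (\<Sum>p\<in>Pl. real k^3 * (ln (real p) / (real p)^2))"
      by (rule sum_mono) (use pr err_large in \<open>auto simp: Pl_def\<close>)
    also have "\<dots> \<le> (\<Sum>n\<in>{Suc (2 * k - 1)..M}. real k^3 * (ln (real n) / (real n)^2))"
      by (rule sum_mono2[OF _ sub]) auto
    also have "\<dots> = real k^3 * (\<Sum>n\<in>{Suc (2 * k - 1)..M}. ln (real n) / (real n)^2)"
      by (simp add: sum_distrib_left)
    also have "\<dots> \<le> real k^3 * gt (2 * k - 1)"
      by (rule mult_left_mono[OF tele_bound]) (use k in auto)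
    also have "\<dots> \<le> real k^2 * (2 + ln (2 * real k))"
    proof -
      have r: "real (2 * k - 1) = 2 * real k - 1" using k by simp
      have q: "2 * real k - 1 \<ge> real k" using k1 by simp
      have lq: "ln (2 * real k - 1) \<le> ln (2 * real k)" using k1 by simp
      have "real k^3 * gt (2 * k - 1) = real k^2 * (real k / (2 * real k - 1)) * (2 + ln (2 * real k - 1))"
        unfolding gt_def r by (simp add: power3_eq_cube power2_eq_square)
      also have "\<dots> \<le> real k^2 * 1 * (2 + ln (2 * real k))"
      proof (rule mult_mono)
        show "real k^2 * (real k / (2 * real k - 1)) \<le> real k^2 * 1"
          using q k1 by (intro mult_left_mono) (auto simp: divide_le_eq)
        show "2 + ln (2 * real k - 1) \<le> 2 + ln (2 * real k)" using lq by simp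
        show "0 \<le> real k^2 * 1" by simp
        show "0 \<le> 2 + ln (2 * real k - 1)" using k1 by simp
      qed
      finally show ?thesis by simp
    qed
    finally show ?thesis .
  qed
  have ln2: "ln (2 * real k) \<le> 1 + ln (real k)"
  proof -
    have "ln (2 * real k) = ln 2 + ln (real k)" using k1 by (simp add: ln_mult)
    moreover have "ln (2::real) \<le> 1" using ln_le_minus_one[of 2] by simp
    ultimately show ?thesis by simp
  qed
  have "(\<Sum>p\<in>P. err p) \<le> 2 * real k^2 * ln (2 * real k) + real k^2 * (2 + ln (2 * real k))"
    using split S1 S2 by linarith
  also have "\<dots> = real k^2 * (2 + 3 * ln (2 * real k))" by (simp add: algebra_simps)
  also have "\<dots> \<le> real k^2 * (5 + 3 * ln (real k))" using ln2 by (intro mult_left_mono) auto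
  finally show ?thesis .
qed

end


lemma e_ge: "exp (1::real) \<ge> 2.5"
  using exp_lower_Taylor_quadratic[of "1::real"] by simp

lemma ln3_gt1: "ln (3::real) > 1"
proof -
  have "exp (1::real) < 3" using e_less_272 by simp
  thus ?thesis by (metis exp_less_cancel_iff exp_ln zero_less_numeral)
qed

lemma ln3_le: "ln (3::real) \<le> 1.5"
proof -
  have "exp (1.5::real) \<ge> 1 + 1.5 + 1.5^2/2" using exp_lower_Taylor_quadratic[of "1.5::real"] by simp
  hence "exp (1.5::real) \<ge> 3" by (simp add: power2_eq_square)
  thus ?thesis by (metis exp_le_cancel_iff exp_ln zero_less_numeral)
qed

lemma sum_ln_lower:
  assumes "k \<ge> 3"
  shows "(\<Sum>l=3..k. ln (real l)) \<ge> real k * ln (real k) - 2 * real k"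
  using assms
proof (induction k rule: nat_induct_at_least)
  case base
  have "ln (3::real) \<le> 3" using ln3_le by simp
  thus ?case by simp
next
  case (Suc k)
  have k0: "real k \<ge> 3" using Suc.hyps by simp
  have lnd: "ln (real (Suc k)) - ln (real k) \<le> 1 / real k"
  proof -
    have "ln (real (Suc k) / real k) \<le> real (Suc k) / real k - 1" using k0 by (intro ln_le_minus_one) auto
    moreover have "ln (real (Suc k) / real k) = ln (real (Suc k)) - ln (real k)" using k0 by (simp add: ln_div)
    moreover have "real (Suc k) / real k - 1 = 1 / real k" using k0 by (simp add: field_simps)
    ultimately show ?thesis by simp
  qed
  have kl: "real k * (ln (real (Suc k)) - ln (real k)) \<le> 1"
  proof -
    have "real k * (ln (real (Suc k)) - ln (real k)) \<le> real k * (1 / real k)" using lnd k0 by (intro mult_left_mono) auto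
    also have "\<dots> = 1" using k0 by simp
    finally show ?thesis .
  qed
  have "(\<Sum>l=3..Suc k. ln (real l)) = (\<Sum>l=3..k. ln (real l)) + ln (real (Suc k))"
    using Suc.hyps by simp
  also have "\<dots> \<ge> real k * ln (real k) - 2 * real k + ln (real (Suc k))" using Suc.IH by simp
  finally have h: "(\<Sum>l=3..Suc k. ln (real l)) \<ge> real k * ln (real k) - 2 * real k + ln (real (Suc k))" .
  have "real (Suc k) * ln (real (Suc k)) - 2 * real (Suc k) = real k * ln (real (Suc k)) + ln (real (Suc k)) - 2 * real k - 2"
    by (simp add: algebra_simps)
  also have "\<dots> \<le> real k * ln (real k) - 2 * real k + ln (real (Suc k))"
    using kl by (simp add: algebra_simps)
  finally show ?case using h by linarith
qed

lemma Cp_bound: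
  assumes k3: "k \<ge> 3"
  shows "C'_const k \<ge> real k^2 * (5 + 3 * ln (real k))"
proof -
  define E where "E l = exp ((exp 1)^2 / real l * (ln (real l) / (ln (real l) - 1))) * ln (real l)" for l :: nat
  define \<Sigma> where "\<Sigma> = (\<Sum>l=3..k. E l)"
  have k0: "real k \<ge> 3" using k3 by simp
  have lnl: "ln (real l) > 1" if "l \<ge> 3" for l
  proof -
    have "ln (3::real) \<le> ln (real l)" using that by simp
    thus ?thesis using ln3_gt1 by linarith
  qed
  have Eln: "E l \<ge> ln (real l)" if "l \<ge> 3" for l
  proof -
    have "(exp 1)^2 / real l * (ln (real l) / (ln (real l) - 1)) \<ge> 0"
      using lnl[OF that] by simp
    hence "exp ((exp 1)^2 / real l * (ln (real l) / (ln (real l) - 1))) \<ge> 1" by simp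
    moreover have "ln (real l) \<ge> 0" using lnl[OF that] by simp
    ultimately show ?thesis unfolding E_def using mult_right_mono[of 1 _ "ln (real l)"] by simp
  qed
  have E3: "E 3 \<ge> 26"
  proof -
    have e2a: "(2.5::real)^2 \<le> (exp 1)^2" by (rule power_mono[OF e_ge]) simp
    have e2b: "(2.5::real)^2 = 6.25" by (simp add: power2_eq_square)
    have e2: "(exp (1::real))^2 \<ge> 6.25" using e2a e2b by linarith
    have r: "ln (3::real) / (ln 3 - 1) \<ge> 3" using ln3_gt1 ln3_le by (simp add: le_divide_eq)
    have "(exp 1)^2 / real (3::nat) * (ln (real (3::nat)) / (ln (real (3::nat)) - 1)) \<ge> 6.25 / 3 * 3"
      using e2 r by (intro mult_mono divide_right_mono) auto
    hence ex: "(exp 1)^2 / real (3::nat) * (ln (real (3::nat)) / (ln (real (3::nat)) - 1)) \<ge> 6.25" by simp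
    define y where "y = (exp 1)^2 / real (3::nat) * (ln (real (3::nat)) / (ln (real (3::nat)) - 1))"
    have t1: "exp (6.25::real) \<ge> 1 + 6.25 + 6.25^2/2" using exp_lower_Taylor_quadratic[of "6.25::real"] by simp
    have t2: "(1 + 6.25 + 6.25^2/2 :: real) \<ge> 26" by (simp add: power2_eq_square)
    have t3: "exp (6.25::real) \<le> exp y" unfolding y_def using ex by (simp only: exp_le_cancel_iff)
    have X: "exp y \<ge> 26" using t1 t2 t3 by linarith
    note X = X[unfolded y_def]
    have "26 * 1 \<le> exp ((exp 1)^2 / real (3::nat) * (ln (real (3::nat)) / (ln (real (3::nat)) - 1))) * ln (real (3::nat))"
      using X ln3_gt1 by (intro mult_mono) auto
    thus ?thesis unfolding E_def by simp
  qed
  have Enn: "E l \<ge> 0" if "l \<ge> 3" for l using Eln[OF that] lnl[OF that] by simp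
  have S1: "\<Sigma> \<ge> 26"
  proof -
    have "E 3 \<le> \<Sigma>" unfolding \<Sigma>_def using k3 Enn by (intro member_le_sum) auto
    thus ?thesis using E3 by simp
  qed
  have S2: "\<Sigma> \<ge> real k * ln (real k) - 2 * real k"
  proof -
    have "(\<Sum>l=3..k. ln (real l)) \<le> \<Sigma>" unfolding \<Sigma>_def using Eln by (intro sum_mono) auto
    thus ?thesis using sum_ln_lower[OF k3] by simp
  qed
  have e2e: "exp (2 * exp 1) \<ge> (18.5::real)"
  proof -
    have "exp (5::real) \<ge> 1 + 5 + 5^2/2" using exp_lower_Taylor_quadratic[of "5::real"] by simp
    moreover have "exp (5::real) \<le> exp (2 * exp 1)" using e_ge by (simp only: exp_le_cancel_iff)
    moreover have "(1 + 5 + 5^2/2 :: real) = 18.5" by (simp add: power2_eq_square)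
    ultimately show ?thesis by linarith
  qed
  have fk: "fact k = real k * fact (k - 1)" using k3 by (intro fact_reduce) simp
  have CC: "fact k * C_const k = real k * exp (2 * exp 1) * \<Sigma>"
  proof -
    have "fact k * C_const k = real k * fact (k - 1) * (exp (2 * exp 1) / fact (k - 1) * \<Sigma>)"
      unfolding C_const_def \<Sigma>_def E_def fk by simp
    also have "\<dots> = real k * exp (2 * exp 1) * \<Sigma>" by simp
    finally show ?thesis .
  qed
  have Sig0: "\<Sigma> \<ge> 0" using S1 by simp
  have main: "exp (2 * exp 1) * \<Sigma> \<ge> real k * (4 + 3 * ln (real k))"
  proof (cases "ln (real k) \<ge> 3")
    case True
    have "real k * ln (real k) \<ge> real k * 3" using True k0 by (intro mult_left_mono) auto
    hence nn: "real k * ln (real k) - 2 * real k \<ge> 0" using k0 by linarith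
    have "exp (2 * exp 1) * \<Sigma> \<ge> 18.5 * (real k * ln (real k) - 2 * real k)"
      using e2e S2 Sig0 nn by (intro mult_mono) auto
    moreover have "18.5 * (real k * ln (real k) - 2 * real k) \<ge> real k * (4 + 3 * ln (real k))"
    proof -
      have "real k * (15.5 * ln (real k) - 41) \<ge> 0" using True k0 by simp
      thus ?thesis by (simp add: algebra_simps)
    qed
    ultimately show ?thesis by linarith
  next
    case False
    have "real k < 21"
    proof -
      have "exp (ln (real k)) < exp 3" using False by simp
      hence "real k < exp 3" using k0 by simp
      moreover have "exp (3::real) = (exp 1)^3" using exp_of_nat_mult[of 3 "1::real"] by simp
      moreover have "(exp (1::real))^3 < 2.72^3" using e_less_272 by (intro power_strict_mono) auto
      moreover have "(2.72::real)^3 \<le> 21" by (simp add: power3_eq_cube)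
      ultimately show ?thesis by linarith
    qed
    have "exp (2 * exp 1) * \<Sigma> \<ge> 18.5 * 26" using e2e S1 by (intro mult_mono) auto
    moreover have "real k * (4 + 3 * ln (real k)) \<le> 21 * (4 + 3 * 3)"
      using \<open>real k < 21\<close> False k0 by (intro mult_mono) auto
    ultimately show ?thesis by simp
  qed
  have "C'_const k = 1.02 * real k^2 + real k * (exp (2 * exp 1) * \<Sigma>)"
    unfolding C'_const_def CC by simp
  also have "\<dots> \<ge> 1.02 * real k^2 + real k * (real k * (4 + 3 * ln (real k)))"
    using main k0 by (intro add_left_mono mult_left_mono) auto
  finally have h: "C'_const k \<ge> 1.02 * real k^2 + real k * (real k * (4 + 3 * ln (real k)))" .
  have "1.02 * real k^2 + real k * (real k * (4 + 3 * ln (real k))) - real k^2 * (5 + 3 * ln (real k)) = 0.02 * real k^2"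
    by (simp add: algebra_simps power2_eq_square)
  moreover have "0.02 * real k^2 \<ge> 0" by simp
  ultimately show ?thesis using h by linarith
qed


context procctx begin

definition fpr :: "nat \<Rightarrow> real" where
  "fpr n = (if prime n then inverse (1 - real (\<omega> n) / real n) * (1 - 1 / real n) ^ k else 1)"

lemma fpr_loc: "prime p \<Longrightarrow> fpr p = loc p"
  unfolding fpr_def loc_def by (simp add: divide_inverse mult.commute)

lemma partial_prod: "prod fpr {..N} = (\<Prod>p\<in>{p. prime p \<and> p \<le> N}. loc p)"
proof -
  have "prod fpr {..N} = prod fpr {p. prime p \<and> p \<le> N}"
    by (rule prod.mono_neutral_right) (auto simp: fpr_def)
  also have "\<dots> = (\<Prod>p\<in>{p. prime p \<and> p \<le> N}. loc p)"
    by (rule prod.cong) (auto simp: fpr_loc)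
  finally show ?thesis .
qed

lemma partial_prod_nonneg: "prod fpr {..N} \<ge> 0"
  unfolding partial_prod by (rule prod_nonneg) (auto intro: less_imp_le loc_pos)

lemma fpr_bounds:
  assumes p: "prime p" and wk: "\<omega> p = k" and pk: "2 * real k \<le> real p"
  shows "norm (fpr p - 1) \<le> real k^2 / real p^2"
proof -
  have p2: "real p \<ge> 2" using prime_ge_2_nat[OF p] by simp
  have k1: "real k \<ge> 1" using k by simp
  have q0: "1 - real k / real p > 0" using pk k1 p2 by (simp add: field_simps)
  have fe: "fpr p = (1 - 1 / real p)^k / (1 - real k / real p)"
    unfolding fpr_def using p wk by (simp add: divide_inverse mult.commute)
  have lo: "(1 - 1 / real p)^k \<ge> 1 - real k / real p"
    using Bernoulli_inequality[of "- (1 / real p)" k] p2 by simp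
  have up: "(1 - 1 / real p)^k \<le> (1 + real k^2 / real p^2) * (1 - real k / real p)"
    using key_ineq[OF k pk] by (simp add: power_divide)
  have "fpr p \<ge> 1" unfolding fe using lo q0 by simp
  moreover have "fpr p \<le> 1 + real k^2 / real p^2" unfolding fe using up q0 by (simp add: divide_le_eq)
  ultimately show ?thesis by simp
qed

lemma fpr_convergent:
  assumes finP0: "finite P0" and outside: "\<And>p. prime p \<Longrightarrow> p \<notin> P0 \<Longrightarrow> \<omega> p = k"
  shows "convergent_prod fpr"
proof -
  define N0 where "N0 = max (2 * k) (Suc (Max (insert 0 P0)))"
  have ev: "\<forall>\<^sub>F n in sequentially. norm (fpr n - 1) \<le> real k^2 * inverse (real n ^ 2)"
    unfolding eventually_sequentially
  proof (intro exI allI impI)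
    fix n assume n: "n \<ge> N0"
    show "norm (fpr n - 1) \<le> real k^2 * inverse (real n ^ 2)"
    proof (cases "prime n")
      case True
      have "n \<notin> P0"
      proof
        assume "n \<in> P0"
        hence "n \<le> Max (insert 0 P0)" using finP0 by (intro Max_ge) auto
        thus False using n unfolding N0_def by simp
      qed
      hence wk: "\<omega> n = k" using outside True by simp
      have "2 * real k \<le> real n" using n unfolding N0_def by simp
      thus ?thesis using fpr_bounds[OF True wk] by (simp add: divide_inverse)
    next
      case False thus ?thesis by (simp add: fpr_def)
    qed
  qed
  have "summable (\<lambda>n. real k^2 * inverse (real n ^ 2))"
    by (rule summable_mult, rule inverse_power_summable) simp
  hence "summable (\<lambda>n. norm (fpr n - 1))"
    using summable_comparison_test_ev[of "\<lambda>n. norm (fpr n - 1)" "\<lambda>n. real k^2 * inverse (real n ^ 2)"] ev by simp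
  hence "abs_convergent_prod fpr" by (rule summable_imp_abs_convergent_prod)
  thus ?thesis by (rule abs_convergent_prod_imp_convergent_prod)
qed

lemma Lfun_eq:
  assumes N: "real N \<ge> z"
  shows "L_fun z (\<lambda>p. real (\<omega> p)) = Sm (lamP {p. prime p \<and> p \<le> N}) z"
  unfolding L_fun_def Sm_def
proof (rule sum.cong[OF refl])
  fix q assume "q \<in> {q. 1 \<le> q \<and> real q \<le> z}"
  hence q1: "q \<ge> 1" and qz: "real q \<le> z" by auto
  have q0: "q \<noteq> 0" using q1 by simp
  have inP: "p \<in> {p. prime p \<and> p \<le> N}" if "p \<in> prime_factors q" for p
  proof -
    have "prime p" "p dvd q" using that by auto
    hence "p \<le> q" using q1 by (intro dvd_imp_le) auto
    hence "real p \<le> real N" using qz N by linarith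
    thus ?thesis using \<open>prime p\<close> by simp
  qed
  have mf_eq: "mf (lamP {p. prime p \<and> p \<le> N}) q = (\<Prod>p\<in>prime_factors q. tgt (gw p) (multiplicity p q))"
    unfolding mf_def by (rule prod.cong[OF refl]) (use inP in \<open>auto simp: lamP_def\<close>)
  show "(if squarefree q then 1 else 0) * (\<Prod>p\<in>prime_factors q. real (\<omega> p) / (real p - real (\<omega> p)))
        = mf (lamP {p. prime p \<and> p \<le> N}) q"
  proof (cases "squarefree q")
    case True
    have "multiplicity p q = 1" if "p \<in> prime_factors q" for p
    proof -
      have "multiplicity p q \<le> 1" using True q0 that by (auto simp: squarefree_factorial_semiring'')
      moreover have "multiplicity p q \<ge> 1" using that q0 by (simp add: prime_factors_multiplicity)
      ultimately show ?thesis by simp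
    qed
    hence "(\<Prod>p\<in>prime_factors q. tgt (gw p) (multiplicity p q)) = (\<Prod>p\<in>prime_factors q. gw p)"
      by (intro prod.cong) (auto simp: tgt_def)
    thus ?thesis using True mf_eq by (simp add: gw_def)
  next
    case False
    then obtain p where p: "prime p" "multiplicity p q > 1"
      using q0 by (auto simp: squarefree_factorial_semiring'' not_le)
    have "p \<in> prime_factors q" using p q0 by (auto simp: prime_factors_multiplicity)
    moreover have "tgt (gw p) (multiplicity p q) = 0" using p by (simp add: tgt_def)
    ultimately have "(\<Prod>p\<in>prime_factors q. tgt (gw p) (multiplicity p q)) = 0"
      by (intro prod_zero) auto
    thus ?thesis using False mf_eq by simp
  qed
qed

end


theorem mainTheorem11:
  fixes \<kappa> :: nat and \<omega> :: "nat \<Rightarrow> nat" and P0 :: "nat set" and z :: real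
  assumes "\<kappa> \<ge> 3"
    and "finite P0" and "\<forall>p\<in>P0. prime p"
    and "\<forall>p\<in>P0. \<omega> p < \<kappa>"
    and "\<forall>p. prime p \<and> p \<notin> P0 \<longrightarrow> \<omega> p = \<kappa>"
    and "\<forall>p. prime p \<longrightarrow> \<omega> p < p"
    and "z > real (primorial (real \<kappa>))"
  shows "L_fun z (\<lambda>p. real (\<omega> p)) \<ge>
    1 / fact \<kappa> *
    (\<Prod>p. if prime p then inverse (1 - real (\<omega> p) / real p) * (1 - 1 / real p) ^ \<kappa> else 1) *
    (ln z) ^ \<kappa> * (1 - C'_const \<kappa> / ln z)"
proof -
  note k3 = assms(1) and finP0 = assms(2) and P0w = assms(4) and outw = assms(5) and wlt = assms(6)
  interpret procctx \<kappa> \<omega>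
  proof
    show "\<kappa> \<ge> 1" using k3 by simp
    show "\<And>p. prime p \<Longrightarrow> \<omega> p < p" using wlt by simp
    show "\<And>p. prime p \<Longrightarrow> \<omega> p \<le> \<kappa>"
      using P0w outw by (metis less_imp_le order_refl)
  qed
  let ?S = "\<Prod>p. if prime p then inverse (1 - real (\<omega> p) / real p) * (1 - 1 / real p) ^ \<kappa> else 1"
  have Sdef: "?S = prodinf fpr" unfolding fpr_def by simp
  have conv: "convergent_prod fpr" by (rule fpr_convergent[OF finP0]) (use outw in auto)
  have lim: "(\<lambda>N. prod fpr {..N}) \<longlonglongrightarrow> prodinf fpr" by (rule convergent_prod_LIMSEQ[OF conv])
  have S0: "prodinf fpr \<ge> 0"
    by (rule LIMSEQ_le_const[OF lim]) (use partial_prod_nonneg in auto)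
  have "real (primorial (real \<kappa>)) \<ge> 1"
  proof -
    have "primorial (real \<kappa>) \<ge> 1" unfolding primorial_def
      by (rule prod_ge_1) (auto dest: prime_gt_0_nat)
    thus ?thesis by simp
  qed
  hence z1: "z > 1" using assms(7) by linarith
  define ll where "ll = ln z"
  have l0: "ll > 0" unfolding ll_def using z1 by simp
  define C where "C = C'_const \<kappa>"
  define K where "K = ll ^ (\<kappa> - 1) * (ll - C) / fact \<kappa>"
  have rhs: "1 / fact \<kappa> * prodinf fpr * ll ^ \<kappa> * (1 - C / ll) = prodinf fpr * K"
  proof -
    have "ll ^ \<kappa> = ll ^ (\<kappa> - 1) * ll" using k3 by (metis Suc_diff_le diff_Suc_1 le_trans one_le_numeral power_Suc2)
    hence hX: "ll ^ \<kappa> * (1 - C / ll) = ll ^ (\<kappa> - 1) * (ll - C)" using l0 by (simp add: field_simps)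
    have "1 / fact \<kappa> * prodinf fpr * ll ^ \<kappa> * (1 - C / ll) = prodinf fpr * (ll ^ \<kappa> * (1 - C / ll)) / fact \<kappa>"
      by simp
    also have "\<dots> = prodinf fpr * (ll ^ (\<kappa> - 1) * (ll - C)) / fact \<kappa>" by (simp only: hX)
    also have "\<dots> = prodinf fpr * K" unfolding K_def by simp
    finally show ?thesis .
  qed
  define N1 where "N1 = nat \<lceil>z\<rceil>"
  have N1z: "real N1 \<ge> z" unfolding N1_def by linarith
  have LSm: "L_fun z (\<lambda>p. real (\<omega> p)) = Sm (lamP {p. prime p \<and> p \<le> N}) z" if "N \<ge> N1" for N
  proof (rule Lfun_eq)
    have "real N \<ge> real N1" using that by simp
    thus "real N \<ge> z" using N1z by linarith
  qed
  have lamnn: "\<And>q e. lamP P q e \<ge> 0" if "\<forall>p\<in>P. prime p" for P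
    unfolding lamP_def using that by (auto intro!: tgt_nonneg gw_nonneg cp_nonneg geo_nonneg)
  have Lnn: "L_fun z (\<lambda>p. real (\<omega> p)) \<ge> 0"
    unfolding LSm[OF order_refl] by (rule Sm_nonneg) (rule lamnn, simp)
  have Cb: "C \<ge> real \<kappa>^2 * (5 + 3 * ln (real \<kappa>))" unfolding C_def by (rule Cp_bound[OF k3])
  show ?thesis
  proof (cases "ll \<le> C")
    case True
    have "K \<le> 0" unfolding K_def using True l0 by (simp add: divide_nonpos_pos mult_nonneg_nonpos)
    hence "prodinf fpr * K \<le> 0" using S0 by (simp add: mult_nonneg_nonpos)
    thus ?thesis using Lnn rhs Sdef unfolding ll_def C_def by simp
  next
    case False
    have K0: "K \<ge> 0" unfolding K_def using False l0 by simp
    have bound: "prod fpr {..N} * K \<le> L_fun z (\<lambda>p. real (\<omega> p))" if N: "N \<ge> N1" for N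
    proof -
      define P where "P = {p. prime p \<and> p \<le> N}"
      have finP: "finite P" unfolding P_def by simp
      have prP: "\<forall>p\<in>P. prime p" unfolding P_def by simp
      have Ab: "(\<Sum>p\<in>P. err p) \<le> C" using err_sum_bound[OF finP prP] Cb by linarith
      have c0: "(\<Prod>p\<in>P. loc p) \<ge> 0" using prP by (intro prod_nonneg) (auto intro: less_imp_le loc_pos)
      have "Sm (lamP P) z \<ge> (\<Prod>p\<in>P. loc p) * ln z ^ (\<kappa> - 1) * (ln z - (\<Sum>p\<in>P. err p)) / fact \<kappa>"
        using main_induct[OF finP prP] z1 by simp
      moreover have "(\<Prod>p\<in>P. loc p) * ln z ^ (\<kappa> - 1) * (ln z - (\<Sum>p\<in>P. err p)) / fact \<kappa> \<ge> (\<Prod>p\<in>P. loc p) * K"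
      proof -
        have "ln z ^ (\<kappa> - 1) * (ln z - (\<Sum>p\<in>P. err p)) / fact \<kappa> \<ge> K"
          unfolding K_def ll_def using Ab l0 ll_def
          by (intro divide_right_mono mult_left_mono) auto
        hence "(\<Prod>p\<in>P. loc p) * K \<le> (\<Prod>p\<in>P. loc p) * (ln z ^ (\<kappa> - 1) * (ln z - (\<Sum>p\<in>P. err p)) / fact \<kappa>)"
          using c0 by (rule mult_left_mono)
        thus ?thesis by (simp add: mult.assoc)
      qed
      ultimately have "Sm (lamP P) z \<ge> (\<Prod>p\<in>P. loc p) * K" by linarith
      thus ?thesis using LSm[OF N] partial_prod[of N] unfolding P_def by simp
    qed
    have lim2: "(\<lambda>N. prod fpr {..N} * K) \<longlonglongrightarrow> prodinf fpr * K" by (rule tendsto_mult_right[OF lim])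
    have "prodinf fpr * K \<le> L_fun z (\<lambda>p. real (\<omega> p))"
      by (rule LIMSEQ_le_const2[OF lim2]) (use bound in auto)
    thus ?thesis using rhs Sdef unfolding ll_def C_def by simp
  qed
qed


end
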